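(* Let $d\ge1$ be a fixed integer and let $G$ be a uniformly random simple $d$-regular graph on $n$ labelled vertices. For a set $E$ of vertex pairs let $\mathcal{X}_E=\mathbf 1\{E\subset E(G)\}$ and $\mathcal{X}_{E^c}=\mathbf 1\{E\cap E(G)=\emptyset\}$ (write $\mathcal{X}_e$ when $E=\{e\}$). Let $E_1,E_2$ be disjoint sets of vertex pairs with $|E_i|=O(\log n)$, $i=1,2$, such that $\mathbb{P}(\mathcal{X}_{E_1}\mathcal{X}_{E_2^c}=1)>0$, and let $e$ be another pair not in $E_1\cup E_2$. Then $$\mathbb{P}(\mathcal{X}_e=1\mid\mathcal{X}_{E_1}\mathcal{X}_{E_2^c}=1)\le\frac dn+O\Big(\frac{|E_1|+|E_2|}{n^2}\Big).$$ Furthermore, if $e$ shares no vertex with any pair in $E_1\cup E_2$, then $$\mathbb{P}(\mathcal{X}_e=1\mid\mathcal{X}_{E_1}\mathcal{X}_{E_2^c}=1)=\frac dn+O\Big(\frac{|E_1|+|E_2|}{n^2}\Big).$$ The same statements hold for a uniformly random simple $d$-regular bipartite graph with $n$ vertices in each part (with all pairs taken between the two parts).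
   Context: The $O(\cdot)$ constants are uniform over all admissible $E_1,E_2,e$ with $|E_1|,|E_2|\le C\log n$ for a fixed constant $C$, and depend only on $d$ and $C$; the statements are for $n$ sufficiently large. *)

theory Defs
  imports Complex_Main
begin

definition vpairs :: "nat \<Rightarrow> nat set set" where
  "vpairs n = {{u, v} | u v. u < n \<and> v < n \<and> u \<noteq> v}"

definition reg_graphs :: "nat \<Rightarrow> nat \<Rightarrow> nat set set set" where
  "reg_graphs n d = {G. G \<subseteq> vpairs n \<and> (\<forall>v<n. card {e \<in> G. v \<in> e} = d)}"

text \<open>Simple d-regular bipartite graphs with parts 0..n-1 (left) and 0..n-1 (right);
  an edge is a pair (left vertex, right vertex).\<close>
definition bip_reg_graphs :: "nat \<Rightarrow> nat \<Rightarrow> (nat \<times> nat) set set" where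
  "bip_reg_graphs n d = {G. G \<subseteq> {..<n} \<times> {..<n} \<and>
      (\<forall>i<n. card {j. (i, j) \<in> G} = d) \<and> (\<forall>j<n. card {i. (i, j) \<in> G} = d)}"

text \<open>For a finite family of graphs (uniform measure), the conditional probability
  P(e \<in> G | E1 \<subseteq> G, E2 \<inter> G = {}).\<close>
definition cond_edge_prob :: "'a set set \<Rightarrow> 'a set \<Rightarrow> 'a set \<Rightarrow> 'a \<Rightarrow> real" where
  "cond_edge_prob \<G> E1 E2 e =
     real (card {G \<in> \<G>. E1 \<subseteq> G \<and> E2 \<inter> G = {} \<and> e \<in> G})
     / real (card {G \<in> \<G>. E1 \<subseteq> G \<and> E2 \<inter> G = {}})"

definition cond_pos :: "'a set set \<Rightarrow> 'a set \<Rightarrow> 'a set \<Rightarrow> bool" where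
  "cond_pos \<G> E1 E2 \<longleftrightarrow> {G \<in> \<G>. E1 \<subseteq> G \<and> E2 \<inter> G = {}} \<noteq> {}"

end

theory Submission
  imports Defs
begin


lemma switch_count:
  fixes A B :: "'g set" and S Q :: "'g \<Rightarrow> 'k set" and sw :: "'g \<Rightarrow> 'k \<Rightarrow> 'g"
  assumes fA: "finite A" and fB: "finite B"
    and SL: "\<And>G. G \<in> A \<Longrightarrow> finite (S G) \<and> L \<le> card (S G)"
    and QD: "\<And>H. H \<in> B \<Longrightarrow> finite (Q H) \<and> card (Q H) \<le> D"
    and swB: "\<And>G k. G \<in> A \<Longrightarrow> k \<in> S G \<Longrightarrow> sw G k \<in> B \<and> k \<in> Q (sw G k)"
    and swinj: "\<And>G G' k. G \<in> A \<Longrightarrow> G' \<in> A \<Longrightarrow> k \<in> S G \<Longrightarrow> k \<in> S G' \<Longrightarrow> sw G k = sw G' k \<Longrightarrow> G = G'"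
  shows "card A * L \<le> D * card B"
proof -
  have "card A * L = (\<Sum>G\<in>A. L)" by simp
  also have "\<dots> \<le> (\<Sum>G\<in>A. card (S G))" by (rule sum_mono) (use SL in auto)
  also have "\<dots> = card (Sigma A S)" using fA SL by (simp add: card_SigmaI)
  also have "\<dots> \<le> card (Sigma B Q)"
  proof (rule card_inj_on_le[where f = "\<lambda>(G, k). (sw G k, k)"])
    show "inj_on (\<lambda>(G, k). (sw G k, k)) (Sigma A S)"
      by (auto simp: inj_on_def intro: swinj)
    show "(\<lambda>(G, k). (sw G k, k)) ` Sigma A S \<subseteq> Sigma B Q" using swB by auto
    show "finite (Sigma B Q)" using fB QD by auto
  qed
  also have "\<dots> = (\<Sum>H\<in>B. card (Q H))" using fB QD by (simp add: card_SigmaI)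
  also have "\<dots> \<le> (\<Sum>H\<in>B. D)" by (rule sum_mono) (use QD in auto)
  also have "\<dots> = D * card B" by simp
  finally show ?thesis .
qed

lemma card_swap1:
  assumes "finite S" "a \<in> S" "b \<notin> S"
  shows "card (insert b (S - {a})) = card S"
  using assms by (simp add: card_insert_if card_Diff_singleton) (metis card_0_eq empty_iff Suc_pred neq0_conv)


lemma vpairs_finite: "finite (vpairs n)"
proof -
  have "vpairs n \<subseteq> Pow {..<n}" unfolding vpairs_def by auto
  thus ?thesis by (rule finite_subset) auto
qed

lemma in_vpairs: "{x, y} \<in> vpairs n \<longleftrightarrow> x < n \<and> y < n \<and> x \<noteq> y"
  unfolding vpairs_def by (auto simp: doubleton_eq_iff)

lemma vpairs_elem: "f \<in> vpairs n \<Longrightarrow> z \<in> f \<Longrightarrow> \<exists>x. f = {z, x} \<and> x < n \<and> x \<noteq> z \<and> z < n"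
  unfolding vpairs_def by auto

lemma reg_finite: "finite (reg_graphs n d)"
proof -
  have "reg_graphs n d \<subseteq> Pow (vpairs n)" unfolding reg_graphs_def by auto
  thus ?thesis using vpairs_finite by (metis finite_Pow_iff finite_subset)
qed

lemma nbr_card:
  assumes "G \<subseteq> vpairs n"
  shows "card {x. {u, x} \<in> G} = card {f \<in> G. u \<in> f}"
proof -
  have "{f \<in> G. u \<in> f} = (\<lambda>x. {u, x}) ` {x. {u, x} \<in> G}"
  proof
    show "{f \<in> G. u \<in> f} \<subseteq> (\<lambda>x. {u, x}) ` {x. {u, x} \<in> G}"
    proof
      fix f assume "f \<in> {f \<in> G. u \<in> f}"
      then obtain x where "f = {u, x}" using vpairs_elem assms by blast
      thus "f \<in> (\<lambda>x. {u, x}) ` {x. {u, x} \<in> G}" using \<open>f \<in> {f \<in> G. u \<in> f}\<close> by auto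
    qed
  qed auto
  moreover have "inj_on (\<lambda>x. {u, x}) {x. {u, x} \<in> G}"
    by (auto simp: inj_on_def doubleton_eq_iff)
  ultimately show ?thesis by (simp add: card_image)
qed

lemma nbr_sub: "G \<subseteq> vpairs n \<Longrightarrow> {x. {u, x} \<in> G} \<subseteq> {..<n}"
  using in_vpairs by blast

lemma deg_reg: "G \<in> reg_graphs n d \<Longrightarrow> u < n \<Longrightarrow> card {x. {u, x} \<in> G} = d"
  unfolding reg_graphs_def using nbr_card by auto


lemma deg_of_nbr: "G \<subseteq> vpairs n \<Longrightarrow> (\<forall>z<n. card {w. {z, w} \<in> G} = d) \<Longrightarrow> G \<in> reg_graphs n d"
  unfolding reg_graphs_def using nbr_card by auto

lemma switch_reg:
  assumes G: "G \<in> reg_graphs n d" and e: "{u, v} \<in> G" and xy: "{x, y} \<in> G"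
    and dist: "x \<noteq> u" "x \<noteq> v" "y \<noteq> u" "y \<noteq> v"
    and nG: "{u, x} \<notin> G" "{v, y} \<notin> G"
  shows "insert {u, x} (insert {v, y} (G - {{u, v}, {x, y}})) \<in> reg_graphs n d"
    (is "?H \<in> _")
proof -
  have GV: "G \<subseteq> vpairs n" using G unfolding reg_graphs_def by auto
  have uv: "u < n" "v < n" "u \<noteq> v" using e GV in_vpairs by blast+
  have xyn: "x < n" "y < n" "x \<noteq> y" using xy GV in_vpairs by blast+
  have HV: "?H \<subseteq> vpairs n" using GV uv xyn dist by (auto simp: in_vpairs)
  have fin: "finite {w. {z, w} \<in> G}" for z using nbr_sub[OF GV] by (meson finite_lessThan finite_subset)
  have dG: "card {w. {z, w} \<in> G} = d" if "z < n" for z using deg_reg[OF G that] .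
  have sym: "{a, b} = {b, a}" for a b :: nat by auto
  show ?thesis
  proof (rule deg_of_nbr[OF HV], intro allI impI)
    fix z assume z: "z < n"
    consider "z = u" | "z = v" | "z = x" | "z = y" | "z \<notin> {u, v, x, y}" by auto
    then show "card {w. {z, w} \<in> ?H} = d"
    proof cases
      case 1
      have "{w. {z, w} \<in> ?H} = insert x ({w. {z, w} \<in> G} - {v})"
        using 1 dist uv xyn by (auto simp: doubleton_eq_iff)
      moreover have "v \<in> {w. {z, w} \<in> G}" "x \<notin> {w. {z, w} \<in> G}" using 1 e nG by auto
      ultimately show ?thesis using card_swap1 fin dG z by metis
    next
      case 2
      have "{w. {z, w} \<in> ?H} = insert y ({w. {z, w} \<in> G} - {u})"
        using 2 dist uv xyn by (auto simp: doubleton_eq_iff)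
      moreover have "u \<in> {w. {z, w} \<in> G}" "y \<notin> {w. {z, w} \<in> G}" using 2 e nG sym by auto
      ultimately show ?thesis using card_swap1 fin dG z by metis
    next
      case 3
      have "{w. {z, w} \<in> ?H} = insert u ({w. {z, w} \<in> G} - {y})"
        using 3 dist uv xyn by (auto simp: doubleton_eq_iff)
      moreover have "y \<in> {w. {z, w} \<in> G}" "u \<notin> {w. {z, w} \<in> G}" using 3 xy nG sym by auto
      ultimately show ?thesis using card_swap1 fin dG z by metis
    next
      case 4
      have "{w. {z, w} \<in> ?H} = insert v ({w. {z, w} \<in> G} - {x})"
        using 4 dist uv xyn by (auto simp: doubleton_eq_iff)
      moreover have "x \<in> {w. {z, w} \<in> G}" "v \<notin> {w. {z, w} \<in> G}" using 4 xy nG sym by auto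
      ultimately show ?thesis using card_swap1 fin dG z by metis
    next
      case 5
      have "{w. {z, w} \<in> ?H} = {w. {z, w} \<in> G}"
        using 5 by (auto simp: doubleton_eq_iff)
      thus ?thesis using dG z by simp
    qed
  qed
qed


lemma P_sigma: "G \<subseteq> vpairs n \<Longrightarrow> {(x, y). {x, y} \<in> G \<and> x \<in> X} = (SIGMA x:X \<inter> {..<n}. {y. {x, y} \<in> G})"
  using in_vpairs by blast

lemma P_fst_card:
  assumes G: "G \<in> reg_graphs n d"
  shows "card {(x, y). {x, y} \<in> G \<and> x \<in> X} = card (X \<inter> {..<n}) * d"
proof -
  have GV: "G \<subseteq> vpairs n" using G unfolding reg_graphs_def by auto
  have fin: "finite {w. {z, w} \<in> G}" for z using nbr_sub[OF GV] by (meson finite_lessThan finite_subset)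
  have "card {(x, y). {x, y} \<in> G \<and> x \<in> X} = (\<Sum>x\<in>X \<inter> {..<n}. card {y. {x, y} \<in> G})"
    unfolding P_sigma[OF GV] using fin by (simp add: card_SigmaI)
  also have "\<dots> = (\<Sum>x\<in>X \<inter> {..<n}. d)" using deg_reg[OF G] by (intro sum.cong) auto
  finally show ?thesis by simp
qed

lemma P_card:
  assumes G: "G \<in> reg_graphs n d"
  shows "card {(x, y). {x, y} \<in> G} = n * d"
  using P_fst_card[OF G, of UNIV] by simp

lemma P_snd_card:
  assumes G: "G \<in> reg_graphs n d"
  shows "card {(x, y). {x, y} \<in> G \<and> y \<in> X} \<le> card (X \<inter> {..<n}) * d"
proof -
  have "{(x, y). {x, y} \<in> G \<and> y \<in> X} = prod.swap ` {(x, y). {x, y} \<in> G \<and> x \<in> X}"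
    by (auto simp: image_iff insert_commute)
  hence "card {(x, y). {x, y} \<in> G \<and> y \<in> X} \<le> card {(x, y). {x, y} \<in> G \<and> x \<in> X}"
    using card_image[of prod.swap "{(x, y). {x, y} \<in> G \<and> x \<in> X}"] by (simp add: inj_on_def)
  thus ?thesis using P_fst_card[OF G] by simp
qed

lemma E_pairs_card:
  assumes "finite E"
  shows "card {(x, y). {x, y} \<in> E} \<le> 2 * card (E::nat set set)"
proof -
  define g where "g = (\<lambda>(f::nat set, b::bool). if b then (Min f, Max f) else (Max f, Min f))"
  have sub: "{(x, y). {x, y} \<in> E} \<subseteq> g ` (E \<times> UNIV)"
  proof
    fix p assume "p \<in> {(x, y). {x, y} \<in> E}"
    then obtain x y where p: "p = (x, y)" "{x, y} \<in> E" by auto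
    show "p \<in> g ` (E \<times> UNIV)"
    proof (cases "x \<le> y")
      case True
      have "g ({x, y}, True) = (x, y)" unfolding g_def using True by simp
      thus ?thesis using p by (metis UNIV_I mem_Sigma_iff rev_image_eqI)
    next
      case False
      have "g ({x, y}, False) = (x, y)" unfolding g_def using False by simp
      thus ?thesis using p by (metis UNIV_I mem_Sigma_iff rev_image_eqI)
    qed
  qed
  have "card {(x, y). {x, y} \<in> E} \<le> card (g ` (E \<times> UNIV))"
    using assms sub by (intro card_mono) auto
  also have "\<dots> \<le> card (E \<times> (UNIV :: bool set))" by (rule card_image_le) (use assms in auto)
  also have "\<dots> = 2 * card E" by (simp add: card_cartesian_product mult.commute)
  finally show ?thesis .
qed

lemma E2_nbr_card:
  assumes "finite E"
  shows "card ({x. {u, x} \<in> E} \<inter> {..<n}) \<le> card (E::nat set set)"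
proof -
  have "card ({x. {u, x} \<in> E} \<inter> {..<n}) = card ((\<lambda>x. {u, x}) ` ({x. {u, x} \<in> E} \<inter> {..<n}))"
    by (rule card_image[symmetric]) (auto simp: inj_on_def doubleton_eq_iff)
  also have "\<dots> \<le> card E" using assms by (intro card_mono) auto
  finally show ?thesis .
qed


lemma card2_le: "card ({u, v::nat} \<inter> X) \<le> 2"
proof -
  have "card ({u, v} \<inter> X) \<le> card {u, v}" by (rule card_mono) auto
  also have "\<dots> \<le> 2" by (simp add: card_insert_if)
  finally show ?thesis .
qed

lemma card_Un7: "card (A1 \<union> A2 \<union> A3 \<union> A4 \<union> A5 \<union> A6 \<union> A7) \<le>
   card A1 + card A2 + card A3 + card A4 + card A5 + card A6 + card A7"
  using card_Un_le[of "A1 \<union> A2 \<union> A3 \<union> A4 \<union> A5 \<union> A6" A7]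
    card_Un_le[of "A1 \<union> A2 \<union> A3 \<union> A4 \<union> A5" A6] card_Un_le[of "A1 \<union> A2 \<union> A3 \<union> A4" A5]
    card_Un_le[of "A1 \<union> A2 \<union> A3" A4] card_Un_le[of "A1 \<union> A2" A3] card_Un_le[of A1 A2] by linarith

lemma S_lower:
  assumes G: "G \<in> reg_graphs n d" and fE: "finite E1" "finite E2" and uv: "u < n" "v < n"
  shows "n * d - (2 * card E1 + 4 * d + 2 * d^2 + 2 * d * card E2) \<le>
    card {(x, y). {x, y} \<in> G \<and> {x, y} \<notin> E1 \<and> x \<noteq> u \<and> x \<noteq> v \<and> y \<noteq> u \<and> y \<noteq> v \<and>
       {u, x} \<notin> G \<and> {v, y} \<notin> G \<and> {u, x} \<notin> E2 \<and> {v, y} \<notin> E2}" (is "_ \<le> card ?S")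
proof -
  have GV: "G \<subseteq> vpairs n" using G unfolding reg_graphs_def by auto
  let ?P = "{(x, y). {x, y} \<in> G}"
  let ?B1 = "{(x, y). {x, y} \<in> E1}"
  let ?B2 = "{(x, y). {x, y} \<in> G \<and> x \<in> {u, v}}"
  let ?B3 = "{(x, y). {x, y} \<in> G \<and> y \<in> {u, v}}"
  let ?B4 = "{(x, y). {x, y} \<in> G \<and> x \<in> {x. {u, x} \<in> G}}"
  let ?B5 = "{(x, y). {x, y} \<in> G \<and> y \<in> {y. {v, y} \<in> G}}"
  let ?B6 = "{(x, y). {x, y} \<in> G \<and> x \<in> {x. {u, x} \<in> E2}}"
  let ?B7 = "{(x, y). {x, y} \<in> G \<and> y \<in> {y. {v, y} \<in> E2}}"
  let ?U = "?B1 \<union> ?B2 \<union> ?B3 \<union> ?B4 \<union> ?B5 \<union> ?B6 \<union> ?B7"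
  have finP: "finite ?P"
  proof -
    have "?P \<subseteq> {..<n} \<times> {..<n}" using GV in_vpairs by blast
    thus ?thesis by (rule finite_subset) auto
  qed
  have fin1: "finite ?B1"
  proof -
    have "?B1 \<subseteq> (\<lambda>(f, b). if b then (Min f, Max f) else (Max f, Min f)) ` (E1 \<times> (UNIV :: bool set))"
    proof
      fix p assume "p \<in> ?B1"
      then obtain x y where p: "p = (x, y)" "{x, y} \<in> E1" by auto
      show "p \<in> (\<lambda>(f, b). if b then (Min f, Max f) else (Max f, Min f)) ` (E1 \<times> (UNIV :: bool set))"
        by (rule image_eqI[where x = "({x, y}, x \<le> y)"]) (use p in auto)
    qed
    thus ?thesis by (rule finite_subset) (use fE in auto)
  qed
  have "?U \<subseteq> ?B1 \<union> ?P" by auto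
  hence finU: "finite ?U" using fin1 finP by (meson finite_UnI finite_subset)
  have sub: "?P - ?U \<subseteq> ?S" by auto
  have c1: "card ?B1 \<le> 2 * card E1" by (rule E_pairs_card[OF fE(1)])
  have c2: "card ?B2 \<le> 2 * d"
  proof -
    have "card ?B2 = card ({u, v} \<inter> {..<n}) * d" by (rule P_fst_card[OF G])
    moreover have "card ({u, v} \<inter> {..<n}) \<le> 2"
      by (rule card2_le)
    ultimately show ?thesis by simp
  qed
  have c3: "card ?B3 \<le> 2 * d"
  proof -
    have "card ?B3 \<le> card ({u, v} \<inter> {..<n}) * d" by (rule P_snd_card[OF G])
    moreover have "card ({u, v} \<inter> {..<n}) \<le> 2"
      by (rule card2_le)
    ultimately show ?thesis by (meson le_trans mult_le_mono1)
  qed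
  have finN: "finite {x. {z, x} \<in> G}" for z using nbr_sub[OF GV] by (meson finite_lessThan finite_subset)
  have c4: "card ?B4 \<le> d * d"
  proof -
    have "card ?B4 = card ({x. {u, x} \<in> G} \<inter> {..<n}) * d" by (rule P_fst_card[OF G])
    moreover have "card ({x. {u, x} \<in> G} \<inter> {..<n}) \<le> d"
      using deg_reg[OF G uv(1)] finN by (metis card_mono inf_le1)
    ultimately show ?thesis by simp
  qed
  have c5: "card ?B5 \<le> d * d"
  proof -
    have "card ?B5 \<le> card ({y. {v, y} \<in> G} \<inter> {..<n}) * d" by (rule P_snd_card[OF G])
    moreover have "card ({y. {v, y} \<in> G} \<inter> {..<n}) \<le> d"
      using deg_reg[OF G uv(2)] finN by (metis card_mono inf_le1)
    ultimately show ?thesis by (meson le_trans mult_le_mono1)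
  qed
  have c6: "card ?B6 \<le> card E2 * d"
    using P_fst_card[OF G, of "{x. {u, x} \<in> E2}"] E2_nbr_card[OF fE(2), of u n] by simp
  have c7: "card ?B7 \<le> card E2 * d"
    using P_snd_card[OF G, of "{x. {v, x} \<in> E2}"] E2_nbr_card[OF fE(2), of v n]
    by (meson le_trans mult_le_mono1)
  have cU: "card ?U \<le> 2 * card E1 + 4 * d + 2 * d^2 + 2 * d * card E2"
    using card_Un7[of ?B1 ?B2 ?B3 ?B4 ?B5 ?B6 ?B7] c1 c2 c3 c4 c5 c6 c7
    by (simp add: power2_eq_square algebra_simps)
  have "card ?P - card ?U \<le> card (?P - ?U)" by (rule diff_card_le_card_Diff[OF finU])
  also have "\<dots> \<le> card ?S"
  proof (rule card_mono[OF _ sub])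
    show "finite ?S" by (rule finite_subset[OF _ finP]) auto
  qed
  finally show ?thesis using P_card[OF G] cU by linarith
qed

lemma frac_bound:
  fixes n d M :: real
  assumes "0 < n" "0 < d" "0 \<le> M" "2 * M \<le> n * d"
  shows "d^2 / (n * d - M) \<le> d / n + 2 * M / n^2"
proof -
  have pos: "0 < n * d - M" using assms by (smt (verit) mult_pos_pos)
  have key: "d^2 * n^2 \<le> (d * n + 2 * M) * (n * d - M)"
  proof -
    have "(d * n + 2 * M) * (n * d - M) = d^2 * n^2 + M * (n * d - 2 * M)"
      by (simp add: algebra_simps power2_eq_square)
    moreover have "0 \<le> M * (n * d - 2 * M)" using assms by simp
    ultimately show ?thesis by simp
  qed
  have "d / n + 2 * M / n^2 = (d * n + 2 * M) / n^2" using assms by (simp add: field_simps power2_eq_square)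
  moreover have "d^2 / (n * d - M) \<le> (d * n + 2 * M) / n^2"
    using key pos assms by (simp add: divide_simps)
  ultimately show ?thesis by simp
qed

lemma recover:
  assumes "{u, v} \<in> G" "{x, y} \<in> G" "{u, x} \<notin> G" "{v, y} \<notin> G"
    "x \<noteq> u" "x \<noteq> v" "y \<noteq> u" "y \<noteq> v" "u \<noteq> v"
  shows "G = insert {u, v} (insert {x, y} (insert {u, x} (insert {v, y} (G - {{u, v}, {x, y}})) - {{u, x}, {v, y}}))"
  using assms by (auto simp: doubleton_eq_iff)

lemma reg_upper:
  assumes E: "E1 \<subseteq> vpairs n" "E2 \<subseteq> vpairs n"
    and e: "{u, v} \<in> vpairs n" "{u, v} \<notin> E1" "{u, v} \<notin> E2"
    and pos: "cond_pos (reg_graphs n d) E1 E2"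
    and M: "M = 2 * card E1 + 4 * d + 2 * d^2 + 2 * d * card E2" "2 * M \<le> n * d" and d: "d \<ge> 1"
  shows "cond_edge_prob (reg_graphs n d) E1 E2 {u, v} \<le> real d / real n + 2 * real M / (real n)^2"
proof -
  have fE: "finite E1" "finite E2" using E vpairs_finite finite_subset by blast+
  have uv: "u < n" "v < n" "u \<noteq> v" using e in_vpairs by blast+
  define Gc where "Gc = {G \<in> reg_graphs n d. E1 \<subseteq> G \<and> E2 \<inter> G = {}}"
  define A where "A = {G \<in> reg_graphs n d. E1 \<subseteq> G \<and> E2 \<inter> G = {} \<and> {u, v} \<in> G}"
  define B where "B = {G \<in> reg_graphs n d. E1 \<subseteq> G \<and> E2 \<inter> G = {} \<and> {u, v} \<notin> G}"
  define S where "S = (\<lambda>G. {(x, y). {x, y} \<in> G \<and> {x, y} \<notin> E1 \<and> x \<noteq> u \<and> x \<noteq> v \<and> y \<noteq> u \<and> y \<noteq> v \<and>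
       {u, x} \<notin> G \<and> {v, y} \<notin> G \<and> {u, x} \<notin> E2 \<and> {v, y} \<notin> E2})"
  define Q where "Q = (\<lambda>H. {x. {u, x} \<in> H} \<times> {y. {v, y} \<in> H})"
  define sw where "sw = (\<lambda>G (x, y). insert {u, x} (insert {v, y} (G - {{u, v}, {x, y}})))"
  have fR: "finite (reg_graphs n d)" by (rule reg_finite)
  have cnt: "card A * (n * d - M) \<le> (d * d) * card B"
  proof (rule switch_count[where S = S and Q = Q and sw = sw])
    show "finite A" "finite B" unfolding A_def B_def using fR by auto
  next
    fix G assume G: "G \<in> A"
    hence GR: "G \<in> reg_graphs n d" unfolding A_def by auto
    hence GV: "G \<subseteq> vpairs n" unfolding reg_graphs_def by auto
    have "S G \<subseteq> {..<n} \<times> {..<n}" unfolding S_def using GV in_vpairs by blast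
    hence "finite (S G)" by (rule finite_subset) auto
    moreover have "n * d - M \<le> card (S G)" unfolding S_def M(1) by (rule S_lower[OF GR fE uv(1,2)])
    ultimately show "finite (S G) \<and> n * d - M \<le> card (S G)" by simp
  next
    fix H assume H: "H \<in> B"
    hence HR: "H \<in> reg_graphs n d" unfolding B_def by auto
    hence HV: "H \<subseteq> vpairs n" unfolding reg_graphs_def by auto
    have f: "finite {x. {z, x} \<in> H}" for z using nbr_sub[OF HV] by (meson finite_lessThan finite_subset)
    show "finite (Q H) \<and> card (Q H) \<le> d * d"
      unfolding Q_def using f deg_reg[OF HR uv(1)] deg_reg[OF HR uv(2)] by (simp add: card_cartesian_product)
  next
    fix G k assume G: "G \<in> A" and k: "k \<in> S G"
    obtain x y where kxy: "k = (x, y)" by (cases k)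
    have GR: "G \<in> reg_graphs n d" and E1G: "E1 \<subseteq> G" and E2G: "E2 \<inter> G = {}" and eG: "{u, v} \<in> G"
      using G unfolding A_def by auto
    have kk: "{x, y} \<in> G" "{x, y} \<notin> E1" "x \<noteq> u" "x \<noteq> v" "y \<noteq> u" "y \<noteq> v"
       "{u, x} \<notin> G" "{v, y} \<notin> G" "{u, x} \<notin> E2" "{v, y} \<notin> E2" using k unfolding S_def kxy by auto
    have swk: "sw G k = insert {u, x} (insert {v, y} (G - {{u, v}, {x, y}}))" unfolding sw_def kxy by simp
    have "sw G k \<in> reg_graphs n d" unfolding swk by (rule switch_reg[OF GR eG kk(1) kk(3-8)])
    moreover have "E1 \<subseteq> sw G k" unfolding swk using E1G kk e by auto
    moreover have "E2 \<inter> sw G k = {}" unfolding swk using E2G kk by auto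
    moreover have "{u, v} \<notin> sw G k" unfolding swk using kk uv by (auto simp: doubleton_eq_iff)
    moreover have "k \<in> Q (sw G k)" unfolding kxy Q_def sw_def by auto
    ultimately show "sw G k \<in> B \<and> k \<in> Q (sw G k)" unfolding B_def by auto
  next
    fix G G' k assume G: "G \<in> A" and G': "G' \<in> A" and k: "k \<in> S G" and k': "k \<in> S G'" and eq: "sw G k = sw G' k"
    obtain x y where kxy: "k = (x, y)" by (cases k)
    have kk: "{x, y} \<in> G" "x \<noteq> u" "x \<noteq> v" "y \<noteq> u" "y \<noteq> v"
       "{u, x} \<notin> G" "{v, y} \<notin> G" using k unfolding S_def kxy by auto
    have kk': "{x, y} \<in> G'" "{u, x} \<notin> G'" "{v, y} \<notin> G'" using k' unfolding S_def kxy by auto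
    have eG: "{u, v} \<in> G" "{u, v} \<in> G'" using G G' unfolding A_def by auto
    have eq': "insert {u, x} (insert {v, y} (G - {{u, v}, {x, y}})) = insert {u, x} (insert {v, y} (G' - {{u, v}, {x, y}}))"
      using eq unfolding sw_def kxy by simp
    show "G = G'"
      using recover[OF eG(1) kk(1) kk(6,7) kk(2-5) uv(3)] recover[OF eG(2) kk'(1) kk'(2,3) kk(2-5) uv(3)] eq'
      by metis
  qed
  have BG: "card B \<le> card Gc" unfolding B_def Gc_def using fR by (intro card_mono) auto
  have Gc0: "card Gc > 0" using pos fR unfolding cond_pos_def Gc_def by (simp add: card_gt_0_iff)
  have nM: "M \<le> n * d" using M by linarith
  have rn: "real n > 0" using uv by simp
  have rL: "real (n * d - M) = real n * real d - real M" using nM by (simp add: of_nat_diff)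
  have M2r: "2 * real M \<le> real n * real d" using M(2) by (metis of_nat_le_iff of_nat_mult of_nat_numeral)
  have Lpos: "real n * real d - real M > 0"
  proof -
    have "real n * real d \<ge> real n * 1" using d by (intro mult_left_mono) auto
    moreover note M2r
    ultimately show ?thesis using rn by linarith
  qed
  have cnt': "real (card A) * (real n * real d - real M) \<le> real d ^ 2 * real (card Gc)"
  proof -
    have "real (card A) * (real n * real d - real M) = real (card A * (n * d - M))" using rL by simp
    also have "\<dots> \<le> real (d * d * card B)" using cnt by (simp only: of_nat_le_iff)
    also have "\<dots> \<le> real (d * d * card Gc)" using BG by (simp only: of_nat_le_iff mult_le_mono2)
    finally show ?thesis by (simp add: power2_eq_square)
  qed
  have "cond_edge_prob (reg_graphs n d) E1 E2 {u, v} = real (card A) / real (card Gc)"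
    unfolding cond_edge_prob_def A_def Gc_def by simp
  also have "\<dots> \<le> real d ^ 2 / (real n * real d - real M)"
    using cnt' Gc0 Lpos by (simp add: divide_simps mult.commute)
  also have "\<dots> \<le> real d / real n + 2 * real M / (real n)^2"
    by (rule frac_bound) (use rn d M2r in auto)
  finally show ?thesis .
qed




definition tr :: "nat \<Rightarrow> nat \<Rightarrow> nat \<Rightarrow> nat" where
  "tr v w z = (if z = v then w else if z = w then v else z)"

lemma tr_tr[simp]: "tr v w (tr v w z) = z" unfolding tr_def by auto

lemma tr_img_img[simp]: "tr v w ` (tr v w ` f) = f"
  by (simp add: image_image)

lemma tr_inj: "inj (tr v w)" by (metis injI tr_tr)

lemma tr_lt: "v < n \<Longrightarrow> w < n \<Longrightarrow> z < n \<Longrightarrow> tr v w z < n" unfolding tr_def by auto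

lemma trG_mem: "f \<in> (\<lambda>f. tr v w ` f) ` G \<longleftrightarrow> tr v w ` f \<in> G"
proof
  assume "f \<in> (\<lambda>f. tr v w ` f) ` G"
  then obtain g where "g \<in> G" "f = tr v w ` g" by auto
  thus "tr v w ` f \<in> G" by simp
next
  assume "tr v w ` f \<in> G"
  thus "f \<in> (\<lambda>f. tr v w ` f) ` G" by (metis image_eqI tr_img_img)
qed

lemma trG_memI: "tr v w ` f \<in> G \<Longrightarrow> f \<in> (\<lambda>f. tr v w ` f) ` G"
  by (rule image_eqI[where x = "tr v w ` f"]) simp_all

lemma trG_memD: "f \<in> (\<lambda>f. tr v w ` f) ` G \<Longrightarrow> tr v w ` f \<in> G"
  by auto

lemma tr_img_mem: "x \<in> tr v w ` N \<longleftrightarrow> tr v w x \<in> N"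
  by (metis image_eqI imageE tr_tr)

lemma tr_pair: "tr v w ` {a, b} = {tr v w a, tr v w b}" by simp

lemma tr_fix: "v \<notin> f \<Longrightarrow> w \<notin> f \<Longrightarrow> tr v w ` f = f"
proof -
  assume a: "v \<notin> f" "w \<notin> f"
  have "tr v w z = z" if "z \<in> f" for z using a that unfolding tr_def by auto
  thus ?thesis by force
qed

lemma reg_swap_le:
  assumes vw: "v < n" "w < n" and u: "u \<noteq> v" "u \<noteq> w"
    and nv: "\<forall>f \<in> E1 \<union> E2. v \<notin> f \<and> w \<notin> f"
  shows "card {G \<in> reg_graphs n d. E1 \<subseteq> G \<and> E2 \<inter> G = {} \<and> {u, v} \<in> G}
       \<le> card {G \<in> reg_graphs n d. E1 \<subseteq> G \<and> E2 \<inter> G = {} \<and> {u, w} \<in> G}"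
proof (rule card_inj_on_le[where f = "\<lambda>G. (\<lambda>f. tr v w ` f) ` G"])
  let ?s = "tr v w"
  let ?\<Phi> = "\<lambda>G. (\<lambda>f. ?s ` f) ` G"
  show "finite {G \<in> reg_graphs n d. E1 \<subseteq> G \<and> E2 \<inter> G = {} \<and> {u, w} \<in> G}"
    using reg_finite by auto
  show "inj_on ?\<Phi> {G \<in> reg_graphs n d. E1 \<subseteq> G \<and> E2 \<inter> G = {} \<and> {u, v} \<in> G}"
  proof (rule inj_onI)
    fix G H assume "?\<Phi> G = ?\<Phi> H"
    hence "\<forall>f. f \<in> ?\<Phi> G \<longleftrightarrow> f \<in> ?\<Phi> H" by simp
    hence "\<forall>f. ?s ` f \<in> G \<longleftrightarrow> ?s ` f \<in> H" by (simp add: trG_mem)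
    hence "\<forall>f. ?s ` (?s ` f) \<in> G \<longleftrightarrow> ?s ` (?s ` f) \<in> H" by blast
    thus "G = H" by auto
  qed
  show "?\<Phi> ` {G \<in> reg_graphs n d. E1 \<subseteq> G \<and> E2 \<inter> G = {} \<and> {u, v} \<in> G}
      \<subseteq> {G \<in> reg_graphs n d. E1 \<subseteq> G \<and> E2 \<inter> G = {} \<and> {u, w} \<in> G}"
  proof (rule subsetI)
    fix H assume "H \<in> ?\<Phi> ` {G \<in> reg_graphs n d. E1 \<subseteq> G \<and> E2 \<inter> G = {} \<and> {u, v} \<in> G}"
    then obtain G where HG: "H = ?\<Phi> G" and GR: "G \<in> reg_graphs n d" and E1G: "E1 \<subseteq> G"
      and E2G: "E2 \<inter> G = {}" and eG: "{u, v} \<in> G" by blast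
    have GV: "G \<subseteq> vpairs n" using GR unfolding reg_graphs_def by auto
    have img2: "?s ` {a, b} = {?s a, ?s b}" for a b by simp
    have HV: "?\<Phi> G \<subseteq> vpairs n"
    proof
      fix f assume "f \<in> ?\<Phi> G"
      then obtain g where g: "g \<in> G" "f = ?s ` g" by auto
      then obtain a b where ab: "g = {a, b}" "a < n" "b < n" "a \<noteq> b" using GV unfolding vpairs_def by blast
      have "?s a \<noteq> ?s b" using ab(4) tr_inj by (metis injD)
      moreover have "f = {?s a, ?s b}" using g(2) ab(1) tr_pair by metis
      ultimately show "f \<in> vpairs n" using tr_lt[OF vw ab(2)] tr_lt[OF vw ab(3)] in_vpairs by metis
    qed
    have R: "?\<Phi> G \<in> reg_graphs n d"
    proof (rule deg_of_nbr[OF HV], intro allI impI)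
      fix z assume z: "z < n"
      have mem: "{z, x} \<in> ?\<Phi> G \<longleftrightarrow> {?s z, ?s x} \<in> G" for x
        using trG_mem[of "{z, x}" v w G] tr_pair[of v w z x] by metis
      have "{x. {z, x} \<in> ?\<Phi> G} = ?s ` {x. {?s z, x} \<in> G}"
        by (rule set_eqI) (simp only: mem tr_img_mem mem_Collect_eq)
      also have "card \<dots> = card {x. {?s z, x} \<in> G}"
        by (rule card_image) (meson inj_on_subset subset_UNIV tr_inj)
      also have "\<dots> = d" by (rule deg_reg[OF GR tr_lt[OF vw z]])
      finally show "card {x. {z, x} \<in> ?\<Phi> G} = d" .
    qed
    have E1H: "E1 \<subseteq> ?\<Phi> G"
    proof
      fix f assume f1: "f \<in> E1"
      have "?s ` f = f" using nv f1 by (intro tr_fix) auto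
      moreover have "f \<in> G" using f1 E1G by blast
      ultimately have "?s ` f \<in> G" by simp
      thus "f \<in> ?\<Phi> G" by (rule trG_memI)
    qed
    have E2H: "E2 \<inter> ?\<Phi> G = {}"
    proof (rule ccontr)
      assume "E2 \<inter> ?\<Phi> G \<noteq> {}"
      then obtain f where fI: "f \<in> E2 \<inter> ?\<Phi> G" by (meson all_not_in_conv)
      have f2: "f \<in> E2" using fI by (rule IntD1)
      have fH: "f \<in> ?\<Phi> G" using fI by (rule IntD2)
      have "?s ` f \<in> G" using fH by (rule trG_memD)
      moreover have "?s ` f = f" using nv f2 by (intro tr_fix) auto
      ultimately have "f \<in> G" by simp
      hence "f \<in> E2 \<inter> G" using f2 by (rule IntI[rotated])
      thus False using E2G by simp
    qed
    have "?s ` {u, w} = {u, v}" using u unfolding tr_def by auto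
    hence "?s ` {u, w} \<in> G" using eG by simp
    hence eH: "{u, w} \<in> ?\<Phi> G" by (rule trG_memI)
    show "H \<in> {G \<in> reg_graphs n d. E1 \<subseteq> G \<and> E2 \<inter> G = {} \<and> {u, w} \<in> G}"
      unfolding HG using R E1H E2H eH by simp
  qed
qed


lemma reg_sum:
  assumes u: "u < n"
  shows "(\<Sum>w\<in>{..<n} - {u}. card {G \<in> reg_graphs n d. E1 \<subseteq> G \<and> E2 \<inter> G = {} \<and> {u, w} \<in> G})
    = d * card {G \<in> reg_graphs n d. E1 \<subseteq> G \<and> E2 \<inter> G = {}}"
proof -
  let ?Gc = "{G \<in> reg_graphs n d. E1 \<subseteq> G \<and> E2 \<inter> G = {}}"
  have fGc: "finite ?Gc" using reg_finite by auto
  have "(\<Sum>w\<in>{..<n} - {u}. card {G \<in> reg_graphs n d. E1 \<subseteq> G \<and> E2 \<inter> G = {} \<and> {u, w} \<in> G})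
     = (\<Sum>w\<in>{..<n} - {u}. \<Sum>G\<in>{G \<in> ?Gc. {u, w} \<in> G}. 1)"
    by (intro sum.cong) auto
  also have "\<dots> = (\<Sum>G\<in>?Gc. \<Sum>w\<in>{w \<in> {..<n} - {u}. {u, w} \<in> G}. 1)"
    by (rule sum.swap_restrict) (use fGc in auto)
  also have "\<dots> = (\<Sum>G\<in>?Gc. d)"
  proof (rule sum.cong[OF refl])
    fix G assume "G \<in> ?Gc"
    hence GR: "G \<in> reg_graphs n d" by auto
    hence GV: "G \<subseteq> vpairs n" unfolding reg_graphs_def by auto
    have "{w \<in> {..<n} - {u}. {u, w} \<in> G} = {w. {u, w} \<in> G}" using GV in_vpairs by blast
    thus "(\<Sum>w\<in>{w \<in> {..<n} - {u}. {u, w} \<in> G}. 1) = d" using deg_reg[OF GR u] by simp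
  qed
  finally show ?thesis by simp
qed

lemma card_touched:
  assumes "F \<subseteq> vpairs n"
  shows "card (\<Union>F) \<le> 2 * card F"
proof -
  have "card (\<Union>F) \<le> sum card F" by (rule card_Union_le_sum_card)
  also have "\<dots> = sum (\<lambda>_. 2) F"
  proof (rule sum.cong[OF refl])
    fix f assume "f \<in> F"
    then obtain a b where "f = {a, b}" "a \<noteq> b" using assms unfolding vpairs_def by blast
    thus "card f = 2" by simp
  qed
  finally show ?thesis by simp
qed


lemma reg_lower:
  assumes E: "E1 \<subseteq> vpairs n" "E2 \<subseteq> vpairs n"
    and e: "{u, v} \<in> vpairs n" and disj: "\<forall>f \<in> E1 \<union> E2. {u, v} \<inter> f = {}"
    and pos: "cond_pos (reg_graphs n d) E1 E2"
    and M: "M = 2 * card E1 + 4 * d + 2 * d^2 + 2 * d * card E2" "2 * M \<le> n * d" and d: "d \<ge> 1"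
  shows "real d / real n - cond_edge_prob (reg_graphs n d) E1 E2 {u, v}
     \<le> 2 * real d * (real (card E1) + real (card E2)) / (real n)^2 + 2 * real M / (real n)^2"
proof -
  have uv: "u < n" "v < n" "u \<noteq> v" using e in_vpairs by blast+
  define T where "T = \<Union>(E1 \<union> E2)"
  define Gc where "Gc = {G \<in> reg_graphs n d. E1 \<subseteq> G \<and> E2 \<inter> G = {}}"
  define p where "p = (\<lambda>w. cond_edge_prob (reg_graphs n d) E1 E2 {u, w})"
  define U where "U = real d / real n + 2 * real M / (real n)^2"
  have fR: "finite (reg_graphs n d)" by (rule reg_finite)
  have Gc0: "card Gc > 0" using pos fR unfolding cond_pos_def Gc_def by (simp add: card_gt_0_iff)
  have uT: "u \<notin> T" and vT: "v \<notin> T" using disj unfolding T_def by auto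
  have pdef: "p w = real (card {G \<in> reg_graphs n d. E1 \<subseteq> G \<and> E2 \<inter> G = {} \<and> {u, w} \<in> G}) / real (card Gc)" for w
    unfolding p_def cond_edge_prob_def Gc_def by simp
  have sum1: "(\<Sum>w\<in>{..<n} - {u}. p w) = real d"
  proof -
    have "(\<Sum>w\<in>{..<n} - {u}. p w) =
        real (\<Sum>w\<in>{..<n} - {u}. card {G \<in> reg_graphs n d. E1 \<subseteq> G \<and> E2 \<inter> G = {} \<and> {u, w} \<in> G}) / real (card Gc)"
      unfolding pdef by (simp add: sum_divide_distrib)
    also have "\<dots> = real d" unfolding reg_sum[OF uv(1)] Gc_def[symmetric] using Gc0 by simp
    finally show ?thesis .
  qed
  define W0 where "W0 = {w \<in> {..<n} - {u}. w \<notin> T}"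
  define W1 where "W1 = {w \<in> {..<n} - {u}. w \<in> T}"
  have W01: "{..<n} - {u} = W0 \<union> W1" "W0 \<inter> W1 = {}" unfolding W0_def W1_def by auto
  have split: "(\<Sum>w\<in>{..<n} - {u}. p w) = (\<Sum>w\<in>W0. p w) + (\<Sum>w\<in>W1. p w)"
    unfolding W01(1) by (rule sum.union_disjoint) (use W01(2) W0_def W1_def in auto)
  have nvw: "\<forall>f \<in> E1 \<union> E2. v \<notin> f \<and> w \<notin> f" if "w \<in> W0" for w
    using that vT unfolding W0_def T_def by auto
  have pW0: "p w = p v" if w: "w \<in> W0" for w
  proof -
    have wn: "w < n" "u \<noteq> w" using w unfolding W0_def by auto
    have "card {G \<in> reg_graphs n d. E1 \<subseteq> G \<and> E2 \<inter> G = {} \<and> {u, v} \<in> G}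
       = card {G \<in> reg_graphs n d. E1 \<subseteq> G \<and> E2 \<inter> G = {} \<and> {u, w} \<in> G}"
    proof (rule antisym)
      show "card {G \<in> reg_graphs n d. E1 \<subseteq> G \<and> E2 \<inter> G = {} \<and> {u, v} \<in> G}
       \<le> card {G \<in> reg_graphs n d. E1 \<subseteq> G \<and> E2 \<inter> G = {} \<and> {u, w} \<in> G}"
        by (rule reg_swap_le) (use uv wn nvw[OF w] in auto)
      show "card {G \<in> reg_graphs n d. E1 \<subseteq> G \<and> E2 \<inter> G = {} \<and> {u, w} \<in> G}
       \<le> card {G \<in> reg_graphs n d. E1 \<subseteq> G \<and> E2 \<inter> G = {} \<and> {u, v} \<in> G}"
        by (rule reg_swap_le) (use uv wn nvw[OF w] in auto)
    qed
    thus ?thesis unfolding pdef by simp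
  qed
  have pW1: "p w \<le> U" if w: "w \<in> W1" for w
  proof -
    have wn: "w < n" "u \<noteq> w" using w unfolding W1_def by auto
    have ne: "{u, w} \<notin> E1" "{u, w} \<notin> E2" using uT unfolding T_def by auto
    show ?thesis unfolding p_def U_def
      by (rule reg_upper[OF E _ ne pos M d]) (use wn uv in \<open>simp add: in_vpairs\<close>)
  qed
  have pnn: "p w \<ge> 0" for w unfolding p_def cond_edge_prob_def by simp
  have vW0: "v \<in> W0" using uv vT unfolding W0_def by auto
  have fW: "finite W0" "finite W1" unfolding W0_def W1_def by auto
  have cW0: "card W0 \<le> n" unfolding W0_def by (rule order_trans[OF card_mono[of "{..<n}"]]) auto
  have cW1n: "card W1 \<le> n" unfolding W1_def by (rule order_trans[OF card_mono[of "{..<n}"]]) auto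
  have cW1: "card W1 \<le> 2 * (card E1 + card E2)"
  proof -
    have "W1 \<subseteq> T" unfolding W1_def by auto
    hence "card W1 \<le> card T"
    proof (rule card_mono[rotated])
      have "T \<subseteq> {..<n}" using E unfolding T_def vpairs_def by auto
      thus "finite T" by (rule finite_subset) auto
    qed
    also have "card T \<le> 2 * card (E1 \<union> E2)" unfolding T_def by (rule card_touched) (use E in auto)
    also have "\<dots> \<le> 2 * (card E1 + card E2)" using card_Un_le[of E1 E2] by (rule mult_le_mono2)
    finally show ?thesis .
  qed
  have "real d = (\<Sum>w\<in>W0. p w) + (\<Sum>w\<in>W1. p w)" using sum1 split by simp
  also have "(\<Sum>w\<in>W0. p w) = real (card W0) * p v" using pW0 by simp
  also have "(\<Sum>w\<in>W1. p w) \<le> real (card W1) * U" using sum_mono[of W1 p "\<lambda>_. U"] pW1 by simp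
  finally have main: "real d \<le> real (card W0) * p v + real (card W1) * U" by simp
  have rn: "real n > 0" using uv by simp
  have "real (card W0) * p v \<le> real n * p v" using cW0 pnn by (intro mult_right_mono) auto
  hence "real d \<le> real n * p v + real (card W1) * U" using main by simp
  hence "real d - real n * p v \<le> real (card W1) * U" by linarith
  hence "(real d - real n * p v) / real n \<le> real (card W1) * U / real n" using rn by (simp add: divide_right_mono)
  moreover have "(real d - real n * p v) / real n = real d / real n - p v" using rn by (simp add: field_simps)
  ultimately have "real d / real n - p v \<le> real (card W1) * U / real n" by simp
  also have "\<dots> = real (card W1) * real d / (real n)^2 + real (card W1) / real n * (2 * real M / (real n)^2)"
    unfolding U_def using rn by (simp add: field_simps power2_eq_square)
  also have "\<dots> \<le> 2 * real d * (real (card E1) + real (card E2)) / (real n)^2 + 2 * real M / (real n)^2"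
  proof (rule add_mono)
    have "real (card W1) * real d \<le> 2 * real d * (real (card E1) + real (card E2))"
    proof -
      have "real (card W1) \<le> 2 * (real (card E1) + real (card E2))" using cW1
        by (metis of_nat_add of_nat_le_iff of_nat_mult of_nat_numeral)
      hence "real (card W1) * real d \<le> 2 * (real (card E1) + real (card E2)) * real d"
        by (rule mult_right_mono) simp
      thus ?thesis by (simp add: algebra_simps)
    qed
    thus "real (card W1) * real d / (real n)^2 \<le> 2 * real d * (real (card E1) + real (card E2)) / (real n)^2"
      by (rule divide_right_mono) simp
    have "real (card W1) / real n \<le> 1" using cW1n rn by simp
    moreover have "0 \<le> 2 * real M / (real n)^2" by simp
    ultimately show "real (card W1) / real n * (2 * real M / (real n)^2) \<le> 2 * real M / (real n)^2"
      using mult_right_mono[of "real (card W1) / real n" 1 "2 * real M / (real n)^2"] by simp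
  qed
  finally show ?thesis unfolding p_def .
qed



lemma bip_finite: "finite (bip_reg_graphs n d)"
proof -
  have "bip_reg_graphs n d \<subseteq> Pow ({..<n} \<times> {..<n})" unfolding bip_reg_graphs_def by auto
  thus ?thesis by (rule finite_subset) auto
qed

lemma bipD:
  assumes "G \<in> bip_reg_graphs n d"
  shows "G \<subseteq> {..<n} \<times> {..<n}" "\<And>i. i < n \<Longrightarrow> card {j. (i, j) \<in> G} = d"
    "\<And>j. j < n \<Longrightarrow> card {i. (i, j) \<in> G} = d"
  using assms unfolding bip_reg_graphs_def by auto

lemma bip_row_fin: "G \<subseteq> {..<n::nat} \<times> {..<n} \<Longrightarrow> finite {j. (i, j) \<in> G}"
  by (rule finite_subset[of _ "{..<n}"]) auto

lemma bip_col_fin: "G \<subseteq> {..<n::nat} \<times> {..<n} \<Longrightarrow> finite {i. (i, j) \<in> G}"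
  by (rule finite_subset[of _ "{..<n}"]) auto

lemma bip_fst_card:
  assumes G: "G \<in> bip_reg_graphs n d"
  shows "card {p \<in> G. fst p \<in> X} = card (X \<inter> {..<n}) * d"
proof -
  have GS: "G \<subseteq> {..<n} \<times> {..<n}" using bipD[OF G] by simp
  have "{p \<in> G. fst p \<in> X} = (SIGMA i:X \<inter> {..<n}. {j. (i, j) \<in> G})" using GS by auto
  hence "card {p \<in> G. fst p \<in> X} = (\<Sum>i\<in>X \<inter> {..<n}. card {j. (i, j) \<in> G})"
    using bip_row_fin[OF GS] by (simp add: card_SigmaI)
  also have "\<dots> = (\<Sum>i\<in>X \<inter> {..<n}. d)" using bipD(2)[OF G] by (intro sum.cong) auto
  finally show ?thesis by simp
qed

lemma bip_snd_card:
  assumes G: "G \<in> bip_reg_graphs n d"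
  shows "card {p \<in> G. snd p \<in> Y} = card (Y \<inter> {..<n}) * d"
proof -
  have GS: "G \<subseteq> {..<n} \<times> {..<n}" using bipD[OF G] by simp
  have "{p \<in> G. snd p \<in> Y} = prod.swap ` (SIGMA j:Y \<inter> {..<n}. {i. (i, j) \<in> G})" using GS by force
  hence "card {p \<in> G. snd p \<in> Y} = card (SIGMA j:Y \<inter> {..<n}. {i. (i, j) \<in> G})"
    using card_image[of prod.swap "SIGMA j:Y \<inter> {..<n}. {i. (i, j) \<in> G}"] by (simp add: inj_on_def)
  also have "\<dots> = (\<Sum>j\<in>Y \<inter> {..<n}. card {i. (i, j) \<in> G})"
    using bip_col_fin[OF GS] by (simp add: card_SigmaI)
  also have "\<dots> = (\<Sum>j\<in>Y \<inter> {..<n}. d)" using bipD(3)[OF G] by (intro sum.cong) auto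
  finally show ?thesis by simp
qed

lemma bip_card: "G \<in> bip_reg_graphs n d \<Longrightarrow> card G = n * d"
  using bip_fst_card[of G n d UNIV] by simp

lemma card1_le: "card ({u::nat} \<inter> X) \<le> 1"
proof -
  have "card ({u} \<inter> X) \<le> card {u}" by (rule card_mono) auto
  thus ?thesis by simp
qed

lemma bip_S_lower:
  assumes G: "G \<in> bip_reg_graphs n d" and fE: "finite E1" "finite E2" and uv: "u < n" "v < n"
  shows "n * d - (2 * card E1 + 4 * d + 2 * d^2 + 2 * d * card E2) \<le>
    card {(x, y). (x, y) \<in> G \<and> (x, y) \<notin> E1 \<and> x \<noteq> u \<and> y \<noteq> v \<and>
       (u, y) \<notin> G \<and> (x, v) \<notin> G \<and> (u, y) \<notin> E2 \<and> (x, v) \<notin> E2}" (is "_ \<le> card ?S")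
proof -
  have GS: "G \<subseteq> {..<n} \<times> {..<n}" using bipD[OF G] by simp
  let ?B1 = "E1"
  let ?B2 = "{p \<in> G. fst p \<in> {u}}"
  let ?B3 = "{p \<in> G. snd p \<in> {v}}"
  let ?B4 = "{p \<in> G. snd p \<in> {y. (u, y) \<in> G}}"
  let ?B5 = "{p \<in> G. fst p \<in> {x. (x, v) \<in> G}}"
  let ?B6 = "{p \<in> G. snd p \<in> {y. (u, y) \<in> E2}}"
  let ?B7 = "{p \<in> G. fst p \<in> {x. (x, v) \<in> E2}}"
  let ?U = "?B1 \<union> ?B2 \<union> ?B3 \<union> ?B4 \<union> ?B5 \<union> ?B6 \<union> ?B7"
  have finG: "finite G" by (rule finite_subset[OF GS]) auto
  have finU: "finite ?U" using fE(1) finG by auto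
  have sub: "G - ?U \<subseteq> ?S" by auto
  have c2: "card ?B2 \<le> d" using bip_fst_card[OF G, of "{u}"] card1_le[of u "{..<n}"] by simp
  have c3: "card ?B3 \<le> d" using bip_snd_card[OF G, of "{v}"] card1_le[of v "{..<n}"] by simp
  have c4: "card ?B4 \<le> d * d"
  proof -
    have "card ({y. (u, y) \<in> G} \<inter> {..<n}) \<le> d"
      using bipD(2)[OF G uv(1)] bip_row_fin[OF GS] by (metis card_mono inf_le1)
    thus ?thesis using bip_snd_card[OF G, of "{y. (u, y) \<in> G}"] by simp
  qed
  have c5: "card ?B5 \<le> d * d"
  proof -
    have "card ({x. (x, v) \<in> G} \<inter> {..<n}) \<le> d"
      using bipD(3)[OF G uv(2)] bip_col_fin[OF GS] by (metis card_mono inf_le1)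
    thus ?thesis using bip_fst_card[OF G, of "{x. (x, v) \<in> G}"] by simp
  qed
  have c6: "card ?B6 \<le> card E2 * d"
  proof -
    have "card ({y. (u, y) \<in> E2} \<inter> {..<n}) = card ((\<lambda>y. (u, y)) ` ({y. (u, y) \<in> E2} \<inter> {..<n}))"
      by (rule card_image[symmetric]) (auto simp: inj_on_def)
    also have "\<dots> \<le> card E2" using fE(2) by (intro card_mono) auto
    finally show ?thesis using bip_snd_card[OF G, of "{y. (u, y) \<in> E2}"] by simp
  qed
  have c7: "card ?B7 \<le> card E2 * d"
  proof -
    have "card ({x. (x, v) \<in> E2} \<inter> {..<n}) = card ((\<lambda>x. (x, v)) ` ({x. (x, v) \<in> E2} \<inter> {..<n}))"
      by (rule card_image[symmetric]) (auto simp: inj_on_def)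
    also have "\<dots> \<le> card E2" using fE(2) by (intro card_mono) auto
    finally show ?thesis using bip_fst_card[OF G, of "{x. (x, v) \<in> E2}"] by simp
  qed
  have cU: "card ?U \<le> 2 * card E1 + 4 * d + 2 * d^2 + 2 * d * card E2"
    using card_Un7[of ?B1 ?B2 ?B3 ?B4 ?B5 ?B6 ?B7] c2 c3 c4 c5 c6 c7
    by (simp add: power2_eq_square algebra_simps)
  have "card G - card ?U \<le> card (G - ?U)" by (rule diff_card_le_card_Diff[OF finU])
  also have "\<dots> \<le> card ?S"
  proof (rule card_mono[OF _ sub])
    show "finite ?S" by (rule finite_subset[OF _ finG]) auto
  qed
  finally show ?thesis using bip_card[OF G] cU by linarith
qed

lemma bip_of: "G \<subseteq> {..<n} \<times> {..<n} \<Longrightarrow> (\<forall>i<n. card {j. (i, j) \<in> G} = d) \<Longrightarrow>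
   (\<forall>j<n. card {i. (i, j) \<in> G} = d) \<Longrightarrow> G \<in> bip_reg_graphs n d"
  unfolding bip_reg_graphs_def by auto

lemma switch_bip:
  assumes G: "G \<in> bip_reg_graphs n d" and e: "(u, v) \<in> G" and xy: "(x, y) \<in> G"
    and dist: "x \<noteq> u" "y \<noteq> v" and nG: "(u, y) \<notin> G" "(x, v) \<notin> G"
  shows "insert (u, y) (insert (x, v) (G - {(u, v), (x, y)})) \<in> bip_reg_graphs n d"
    (is "?H \<in> _")
proof -
  have GS: "G \<subseteq> {..<n} \<times> {..<n}" using bipD[OF G] by simp
  have n: "u < n" "v < n" "x < n" "y < n" using e xy GS by auto
  have HS: "?H \<subseteq> {..<n} \<times> {..<n}" using GS n by auto
  show ?thesis
  proof (rule bip_of[OF HS]; intro allI impI)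
    fix i assume i: "i < n"
    show "card {j. (i, j) \<in> ?H} = d"
    proof (cases "i = u \<or> i = x")
      case True
      then consider "i = u" | "i = x" by blast
      thus ?thesis
      proof cases
        case 1
        have "{j. (i, j) \<in> ?H} = insert y ({j. (i, j) \<in> G} - {v})" using 1 dist by auto
        moreover have "v \<in> {j. (i, j) \<in> G}" "y \<notin> {j. (i, j) \<in> G}" using 1 e nG by auto
        ultimately show ?thesis using card_swap1 bip_row_fin[OF GS] bipD(2)[OF G i] by metis
      next
        case 2
        have "{j. (i, j) \<in> ?H} = insert v ({j. (i, j) \<in> G} - {y})" using 2 dist by auto
        moreover have "y \<in> {j. (i, j) \<in> G}" "v \<notin> {j. (i, j) \<in> G}" using 2 xy nG by auto
        ultimately show ?thesis using card_swap1 bip_row_fin[OF GS] bipD(2)[OF G i] by metis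
      qed
    next
      case False
      hence "{j. (i, j) \<in> ?H} = {j. (i, j) \<in> G}" by auto
      thus ?thesis using bipD(2)[OF G i] by simp
    qed
  next
    fix j assume j: "j < n"
    show "card {i. (i, j) \<in> ?H} = d"
    proof (cases "j = v \<or> j = y")
      case True
      then consider "j = v" | "j = y" by blast
      thus ?thesis
      proof cases
        case 1
        have "{i. (i, j) \<in> ?H} = insert x ({i. (i, j) \<in> G} - {u})" using 1 dist by auto
        moreover have "u \<in> {i. (i, j) \<in> G}" "x \<notin> {i. (i, j) \<in> G}" using 1 e nG by auto
        ultimately show ?thesis using card_swap1 bip_col_fin[OF GS] bipD(3)[OF G j] by metis
      next
        case 2
        have "{i. (i, j) \<in> ?H} = insert u ({i. (i, j) \<in> G} - {x})" using 2 dist by auto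
        moreover have "x \<in> {i. (i, j) \<in> G}" "u \<notin> {i. (i, j) \<in> G}" using 2 xy nG by auto
        ultimately show ?thesis using card_swap1 bip_col_fin[OF GS] bipD(3)[OF G j] by metis
      qed
    next
      case False
      hence "{i. (i, j) \<in> ?H} = {i. (i, j) \<in> G}" by auto
      thus ?thesis using bipD(3)[OF G j] by simp
    qed
  qed
qed

lemma bip_upper:
  assumes E: "E1 \<subseteq> {..<n} \<times> {..<n}" "E2 \<subseteq> {..<n} \<times> {..<n}"
    and e: "u < n" "v < n" "(u, v) \<notin> E1" "(u, v) \<notin> E2"
    and pos: "cond_pos (bip_reg_graphs n d) E1 E2"
    and M: "M = 2 * card E1 + 4 * d + 2 * d^2 + 2 * d * card E2" "2 * M \<le> n * d" and d: "d \<ge> 1"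
  shows "cond_edge_prob (bip_reg_graphs n d) E1 E2 (u, v) \<le> real d / real n + 2 * real M / (real n)^2"
proof -
  have fE: "finite E1" "finite E2" using E by (auto intro: finite_subset)
  define Gc where "Gc = {G \<in> bip_reg_graphs n d. E1 \<subseteq> G \<and> E2 \<inter> G = {}}"
  define A where "A = {G \<in> bip_reg_graphs n d. E1 \<subseteq> G \<and> E2 \<inter> G = {} \<and> (u, v) \<in> G}"
  define B where "B = {G \<in> bip_reg_graphs n d. E1 \<subseteq> G \<and> E2 \<inter> G = {} \<and> (u, v) \<notin> G}"
  define S where "S = (\<lambda>G. {(x, y). (x, y) \<in> G \<and> (x, y) \<notin> E1 \<and> x \<noteq> u \<and> y \<noteq> v \<and>
       (u, y) \<notin> G \<and> (x, v) \<notin> G \<and> (u, y) \<notin> E2 \<and> (x, v) \<notin> E2})"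
  define Q where "Q = (\<lambda>H. {x. (x, v) \<in> H} \<times> {y. (u, y) \<in> H})"
  define sw where "sw = (\<lambda>G (x, y). insert (u, y) (insert (x, v) (G - {(u, v), (x, y)})))"
  have fR: "finite (bip_reg_graphs n d)" by (rule bip_finite)
  have cnt: "card A * (n * d - M) \<le> (d * d) * card B"
  proof (rule switch_count[where S = S and Q = Q and sw = sw])
    show "finite A" "finite B" unfolding A_def B_def using fR by auto
  next
    fix G assume G: "G \<in> A"
    hence GR: "G \<in> bip_reg_graphs n d" unfolding A_def by auto
    have "S G \<subseteq> G" unfolding S_def by auto
    hence "finite (S G)" using bipD(1)[OF GR] by (meson finite_SigmaI finite_lessThan finite_subset)
    moreover have "n * d - M \<le> card (S G)" unfolding S_def M(1) by (rule bip_S_lower[OF GR fE e(1,2)])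
    ultimately show "finite (S G) \<and> n * d - M \<le> card (S G)" by simp
  next
    fix H assume H: "H \<in> B"
    hence HR: "H \<in> bip_reg_graphs n d" unfolding B_def by auto
    have HS: "H \<subseteq> {..<n} \<times> {..<n}" using bipD(1)[OF HR] .
    show "finite (Q H) \<and> card (Q H) \<le> d * d"
      unfolding Q_def using bip_row_fin[OF HS] bip_col_fin[OF HS] bipD(2)[OF HR e(1)] bipD(3)[OF HR e(2)]
      by (simp add: card_cartesian_product)
  next
    fix G k assume G: "G \<in> A" and k: "k \<in> S G"
    obtain x y where kxy: "k = (x, y)" by (cases k)
    have GR: "G \<in> bip_reg_graphs n d" and E1G: "E1 \<subseteq> G" and E2G: "E2 \<inter> G = {}" and eG: "(u, v) \<in> G"
      using G unfolding A_def by auto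
    have kk: "(x, y) \<in> G" "(x, y) \<notin> E1" "x \<noteq> u" "y \<noteq> v"
       "(u, y) \<notin> G" "(x, v) \<notin> G" "(u, y) \<notin> E2" "(x, v) \<notin> E2" using k unfolding S_def kxy by auto
    have swk: "sw G k = insert (u, y) (insert (x, v) (G - {(u, v), (x, y)}))" unfolding sw_def kxy by simp
    have "sw G k \<in> bip_reg_graphs n d" unfolding swk by (rule switch_bip[OF GR eG kk(1) kk(3-6)])
    moreover have "E1 \<subseteq> sw G k" unfolding swk using E1G kk e by auto
    moreover have "E2 \<inter> sw G k = {}" unfolding swk using E2G kk by auto
    moreover have "(u, v) \<notin> sw G k" unfolding swk using kk by auto
    moreover have "k \<in> Q (sw G k)" unfolding kxy Q_def sw_def by auto
    ultimately show "sw G k \<in> B \<and> k \<in> Q (sw G k)" unfolding B_def by auto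
  next
    fix G G' k assume G: "G \<in> A" and G': "G' \<in> A" and k: "k \<in> S G" and k': "k \<in> S G'" and eq: "sw G k = sw G' k"
    obtain x y where kxy: "k = (x, y)" by (cases k)
    have kk: "(x, y) \<in> G" "x \<noteq> u" "y \<noteq> v" "(u, y) \<notin> G" "(x, v) \<notin> G" using k unfolding S_def kxy by auto
    have kk': "(x, y) \<in> G'" "(u, y) \<notin> G'" "(x, v) \<notin> G'" using k' unfolding S_def kxy by auto
    have eG: "(u, v) \<in> G" "(u, v) \<in> G'" using G G' unfolding A_def by auto
    have eq': "insert (u, y) (insert (x, v) (G - {(u, v), (x, y)})) = insert (u, y) (insert (x, v) (G' - {(u, v), (x, y)}))"
      using eq unfolding sw_def kxy by simp
    have rec: "K = insert (u, v) (insert (x, y) (insert (u, y) (insert (x, v) (K - {(u, v), (x, y)})) - {(u, y), (x, v)}))"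
      if "(u, v) \<in> K" "(x, y) \<in> K" "(u, y) \<notin> K" "(x, v) \<notin> K" for K
      using that kk(2,3) by auto
    show "G = G'" using rec[OF eG(1) kk(1) kk(4,5)] rec[OF eG(2) kk'] eq' by metis
  qed
  have BG: "card B \<le> card Gc" unfolding B_def Gc_def using fR by (intro card_mono) auto
  have Gc0: "card Gc > 0" using pos fR unfolding cond_pos_def Gc_def by (simp add: card_gt_0_iff)
  have nM: "M \<le> n * d" using M by linarith
  have rn: "real n > 0" using e by simp
  have rL: "real (n * d - M) = real n * real d - real M" using nM by (simp add: of_nat_diff)
  have M2r: "2 * real M \<le> real n * real d" using M(2) by (metis of_nat_le_iff of_nat_mult of_nat_numeral)
  have Lpos: "real n * real d - real M > 0"
  proof -
    have "real n * real d \<ge> real n * 1" using d by (intro mult_left_mono) auto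
    thus ?thesis using M2r rn by linarith
  qed
  have cnt': "real (card A) * (real n * real d - real M) \<le> real d ^ 2 * real (card Gc)"
  proof -
    have "real (card A) * (real n * real d - real M) = real (card A * (n * d - M))" using rL by simp
    also have "\<dots> \<le> real (d * d * card B)" using cnt by (simp only: of_nat_le_iff)
    also have "\<dots> \<le> real (d * d * card Gc)" using BG by (simp only: of_nat_le_iff mult_le_mono2)
    finally show ?thesis by (simp add: power2_eq_square)
  qed
  have "cond_edge_prob (bip_reg_graphs n d) E1 E2 (u, v) = real (card A) / real (card Gc)"
    unfolding cond_edge_prob_def A_def Gc_def by simp
  also have "\<dots> \<le> real d ^ 2 / (real n * real d - real M)"
    using cnt' Gc0 Lpos by (simp add: divide_simps mult.commute)
  also have "\<dots> \<le> real d / real n + 2 * real M / (real n)^2"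
    by (rule frac_bound) (use rn d M2r in auto)
  finally show ?thesis .
qed

definition trp :: "nat \<Rightarrow> nat \<Rightarrow> nat \<times> nat \<Rightarrow> nat \<times> nat" where
  "trp v w p = (fst p, tr v w (snd p))"

lemma trp_trp[simp]: "trp v w (trp v w p) = p" unfolding trp_def by simp

lemma trpG_memI: "trp v w p \<in> G \<Longrightarrow> p \<in> trp v w ` G"
  by (rule image_eqI[where x = "trp v w p"]) simp_all

lemma trpG_memD: "p \<in> trp v w ` G \<Longrightarrow> trp v w p \<in> G"
  by auto

lemma trpG_mem: "p \<in> trp v w ` G \<longleftrightarrow> trp v w p \<in> G"
  using trpG_memI trpG_memD by metis

lemma bip_swap_le:
  assumes vw: "v < n" "w < n"
    and nv: "\<forall>f \<in> E1 \<union> E2. snd f \<noteq> v \<and> snd f \<noteq> w"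
  shows "card {G \<in> bip_reg_graphs n d. E1 \<subseteq> G \<and> E2 \<inter> G = {} \<and> (u, v) \<in> G}
       \<le> card {G \<in> bip_reg_graphs n d. E1 \<subseteq> G \<and> E2 \<inter> G = {} \<and> (u, w) \<in> G}"
proof (rule card_inj_on_le[where f = "\<lambda>G. trp v w ` G"])
  let ?s = "trp v w"
  show "finite {G \<in> bip_reg_graphs n d. E1 \<subseteq> G \<and> E2 \<inter> G = {} \<and> (u, w) \<in> G}"
    using bip_finite by auto
  show "inj_on (\<lambda>G. ?s ` G) {G \<in> bip_reg_graphs n d. E1 \<subseteq> G \<and> E2 \<inter> G = {} \<and> (u, v) \<in> G}"
  proof (rule inj_onI)
    fix G H assume "?s ` G = ?s ` H"
    hence "?s ` (?s ` G) = ?s ` (?s ` H)" by simp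
    thus "G = H" by (simp add: image_image)
  qed
  show "(\<lambda>G. ?s ` G) ` {G \<in> bip_reg_graphs n d. E1 \<subseteq> G \<and> E2 \<inter> G = {} \<and> (u, v) \<in> G}
      \<subseteq> {G \<in> bip_reg_graphs n d. E1 \<subseteq> G \<and> E2 \<inter> G = {} \<and> (u, w) \<in> G}"
  proof (rule subsetI)
    fix H assume "H \<in> (\<lambda>G. ?s ` G) ` {G \<in> bip_reg_graphs n d. E1 \<subseteq> G \<and> E2 \<inter> G = {} \<and> (u, v) \<in> G}"
    then obtain G where HG: "H = ?s ` G" and GR: "G \<in> bip_reg_graphs n d" and E1G: "E1 \<subseteq> G"
      and E2G: "E2 \<inter> G = {}" and eG: "(u, v) \<in> G" by blast
    have GS: "G \<subseteq> {..<n} \<times> {..<n}" using bipD(1)[OF GR] .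
    have mem: "(i, j) \<in> ?s ` G \<longleftrightarrow> (i, tr v w j) \<in> G" for i j
      using trpG_mem[of "(i, j)" v w G] unfolding trp_def by simp
    have HS: "?s ` G \<subseteq> {..<n} \<times> {..<n}"
    proof
      fix p assume "p \<in> ?s ` G"
      then obtain q where q: "q \<in> G" "p = ?s q" by blast
      thus "p \<in> {..<n} \<times> {..<n}" using GS tr_lt[OF vw] unfolding trp_def by auto
    qed
    have R: "?s ` G \<in> bip_reg_graphs n d"
    proof (rule bip_of[OF HS]; intro allI impI)
      fix i assume i: "i < n"
      have "{j. (i, j) \<in> ?s ` G} = tr v w ` {j. (i, j) \<in> G}"
        by (rule set_eqI) (simp only: mem tr_img_mem mem_Collect_eq)
      also have "card \<dots> = card {j. (i, j) \<in> G}"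
        by (rule card_image) (meson inj_on_subset subset_UNIV tr_inj)
      also have "\<dots> = d" by (rule bipD(2)[OF GR i])
      finally show "card {j. (i, j) \<in> ?s ` G} = d" .
    next
      fix j assume j: "j < n"
      have "{i. (i, j) \<in> ?s ` G} = {i. (i, tr v w j) \<in> G}" by (simp only: mem)
      also have "card \<dots> = d" by (rule bipD(3)[OF GR tr_lt[OF vw j]])
      finally show "card {i. (i, j) \<in> ?s ` G} = d" .
    qed
    have fixp: "?s f = f" if "f \<in> E1 \<union> E2" for f
    proof -
      have "snd f \<noteq> v" "snd f \<noteq> w" using nv that by auto
      thus ?thesis unfolding trp_def tr_def by simp
    qed
    have E1H: "E1 \<subseteq> ?s ` G"
    proof
      fix f assume f1: "f \<in> E1"
      have "?s f = f" using fixp f1 by blast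
      moreover have "f \<in> G" using f1 E1G by blast
      ultimately have "?s f \<in> G" by simp
      thus "f \<in> ?s ` G" by (rule trpG_memI)
    qed
    have E2H: "E2 \<inter> ?s ` G = {}"
    proof (rule ccontr)
      assume "E2 \<inter> ?s ` G \<noteq> {}"
      then obtain f where fI: "f \<in> E2 \<inter> ?s ` G" by (meson all_not_in_conv)
      have f2: "f \<in> E2" using fI by (rule IntD1)
      have fH: "f \<in> ?s ` G" using fI by (rule IntD2)
      have "?s f \<in> G" using fH by (rule trpG_memD)
      moreover have "?s f = f" using fixp f2 by blast
      ultimately have "f \<in> G" by simp
      hence "f \<in> E2 \<inter> G" using f2 by (rule IntI[rotated])
      thus False using E2G by simp
    qed
    have "?s (u, w) = (u, v)" unfolding trp_def tr_def by simp
    hence "?s (u, w) \<in> G" using eG by simp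
    hence eH: "(u, w) \<in> ?s ` G" by (rule trpG_memI)
    show "H \<in> {G \<in> bip_reg_graphs n d. E1 \<subseteq> G \<and> E2 \<inter> G = {} \<and> (u, w) \<in> G}"
      unfolding HG using R E1H E2H eH by simp
  qed
qed

lemma bip_sum:
  assumes u: "u < n"
  shows "(\<Sum>w\<in>{..<n}. card {G \<in> bip_reg_graphs n d. E1 \<subseteq> G \<and> E2 \<inter> G = {} \<and> (u, w) \<in> G})
    = d * card {G \<in> bip_reg_graphs n d. E1 \<subseteq> G \<and> E2 \<inter> G = {}}"
proof -
  let ?Gc = "{G \<in> bip_reg_graphs n d. E1 \<subseteq> G \<and> E2 \<inter> G = {}}"
  have fGc: "finite ?Gc" using bip_finite by auto
  have "(\<Sum>w\<in>{..<n}. card {G \<in> bip_reg_graphs n d. E1 \<subseteq> G \<and> E2 \<inter> G = {} \<and> (u, w) \<in> G})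
     = (\<Sum>w\<in>{..<n}. \<Sum>G\<in>{G \<in> ?Gc. (u, w) \<in> G}. 1)"
    by (intro sum.cong) auto
  also have "\<dots> = (\<Sum>G\<in>?Gc. \<Sum>w\<in>{w \<in> {..<n}. (u, w) \<in> G}. 1)"
    by (rule sum.swap_restrict) (use fGc in auto)
  also have "\<dots> = (\<Sum>G\<in>?Gc. d)"
  proof (rule sum.cong[OF refl])
    fix G assume "G \<in> ?Gc"
    hence GR: "G \<in> bip_reg_graphs n d" by auto
    have "{w \<in> {..<n}. (u, w) \<in> G} = {w. (u, w) \<in> G}" using bipD(1)[OF GR] by blast
    thus "(\<Sum>w\<in>{w \<in> {..<n}. (u, w) \<in> G}. 1) = d" using bipD(2)[OF GR u] by simp
  qed
  finally show ?thesis by simp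
qed

lemma bip_lower:
  assumes E: "E1 \<subseteq> {..<n} \<times> {..<n}" "E2 \<subseteq> {..<n} \<times> {..<n}"
    and e: "u < n" "v < n" and disj: "\<forall>f \<in> E1 \<union> E2. u \<noteq> fst f \<and> v \<noteq> snd f"
    and pos: "cond_pos (bip_reg_graphs n d) E1 E2"
    and M: "M = 2 * card E1 + 4 * d + 2 * d^2 + 2 * d * card E2" "2 * M \<le> n * d" and d: "d \<ge> 1"
  shows "real d / real n - cond_edge_prob (bip_reg_graphs n d) E1 E2 (u, v)
     \<le> 2 * real d * (real (card E1) + real (card E2)) / (real n)^2 + 2 * real M / (real n)^2"
proof -
  define T where "T = snd ` (E1 \<union> E2)"
  define Gc where "Gc = {G \<in> bip_reg_graphs n d. E1 \<subseteq> G \<and> E2 \<inter> G = {}}"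
  define p where "p = (\<lambda>w. cond_edge_prob (bip_reg_graphs n d) E1 E2 (u, w))"
  define U where "U = real d / real n + 2 * real M / (real n)^2"
  have fE: "finite E1" "finite E2" using E by (auto intro: finite_subset)
  have fR: "finite (bip_reg_graphs n d)" by (rule bip_finite)
  have Gc0: "card Gc > 0" using pos fR unfolding cond_pos_def Gc_def by (simp add: card_gt_0_iff)
  have vT: "v \<notin> T" using disj unfolding T_def by auto
  have pdef: "p w = real (card {G \<in> bip_reg_graphs n d. E1 \<subseteq> G \<and> E2 \<inter> G = {} \<and> (u, w) \<in> G}) / real (card Gc)" for w
    unfolding p_def cond_edge_prob_def Gc_def by simp
  have sum1: "(\<Sum>w\<in>{..<n}. p w) = real d"
  proof -
    have "(\<Sum>w\<in>{..<n}. p w) =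
        real (\<Sum>w\<in>{..<n}. card {G \<in> bip_reg_graphs n d. E1 \<subseteq> G \<and> E2 \<inter> G = {} \<and> (u, w) \<in> G}) / real (card Gc)"
      unfolding pdef by (simp add: sum_divide_distrib)
    also have "\<dots> = real d" unfolding bip_sum[OF e(1)] Gc_def[symmetric] using Gc0 by simp
    finally show ?thesis .
  qed
  define W0 where "W0 = {w \<in> {..<n}. w \<notin> T}"
  define W1 where "W1 = {w \<in> {..<n}. w \<in> T}"
  have W01: "{..<n} = W0 \<union> W1" "W0 \<inter> W1 = {}" unfolding W0_def W1_def by auto
  have split: "(\<Sum>w\<in>{..<n}. p w) = (\<Sum>w\<in>W0. p w) + (\<Sum>w\<in>W1. p w)"
    unfolding W01(1) by (rule sum.union_disjoint) (use W01(2) W0_def W1_def in auto)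
  have nvw: "\<forall>f \<in> E1 \<union> E2. snd f \<noteq> v \<and> snd f \<noteq> w" if "w \<in> W0" for w
    using that vT unfolding W0_def T_def by force
  have nwv: "\<forall>f \<in> E1 \<union> E2. snd f \<noteq> w \<and> snd f \<noteq> v" if "w \<in> W0" for w
    using nvw[OF that] by blast
  have pW0: "p w = p v" if w: "w \<in> W0" for w
  proof -
    have wn: "w < n" using w unfolding W0_def by auto
    have "card {G \<in> bip_reg_graphs n d. E1 \<subseteq> G \<and> E2 \<inter> G = {} \<and> (u, v) \<in> G}
       = card {G \<in> bip_reg_graphs n d. E1 \<subseteq> G \<and> E2 \<inter> G = {} \<and> (u, w) \<in> G}"
    proof (rule antisym)
      show "card {G \<in> bip_reg_graphs n d. E1 \<subseteq> G \<and> E2 \<inter> G = {} \<and> (u, v) \<in> G}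
       \<le> card {G \<in> bip_reg_graphs n d. E1 \<subseteq> G \<and> E2 \<inter> G = {} \<and> (u, w) \<in> G}"
        by (rule bip_swap_le[OF e(2) wn nvw[OF w]])
      show "card {G \<in> bip_reg_graphs n d. E1 \<subseteq> G \<and> E2 \<inter> G = {} \<and> (u, w) \<in> G}
       \<le> card {G \<in> bip_reg_graphs n d. E1 \<subseteq> G \<and> E2 \<inter> G = {} \<and> (u, v) \<in> G}"
        by (rule bip_swap_le[OF wn e(2) nwv[OF w]])
    qed
    thus ?thesis unfolding pdef by simp
  qed
  have pW1: "p w \<le> U" if w: "w \<in> W1" for w
  proof -
    have wn: "w < n" using w unfolding W1_def by auto
    have ne: "(u, w) \<notin> E1" "(u, w) \<notin> E2" using disj by (metis UnI1 fst_conv, metis UnI2 fst_conv)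
    show ?thesis unfolding p_def U_def by (rule bip_upper[OF E e(1) wn ne pos M d])
  qed
  have pnn: "p w \<ge> 0" for w unfolding p_def cond_edge_prob_def by simp
  have rn: "real n > 0" using e by simp
  have fW: "finite W0" "finite W1" unfolding W0_def W1_def by auto
  have cW0: "card W0 \<le> n" unfolding W0_def by (rule order_trans[OF card_mono[of "{..<n}"]]) auto
  have cW1n: "card W1 \<le> n" unfolding W1_def by (rule order_trans[OF card_mono[of "{..<n}"]]) auto
  have cW1: "card W1 \<le> 2 * (card E1 + card E2)"
  proof -
    have "W1 \<subseteq> T" unfolding W1_def by auto
    hence "card W1 \<le> card T" by (rule card_mono[rotated]) (use fE in \<open>simp add: T_def\<close>)
    also have "card T \<le> card (E1 \<union> E2)" unfolding T_def by (rule card_image_le) (use fE in simp)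
    also have "\<dots> \<le> card E1 + card E2" by (rule card_Un_le)
    finally show ?thesis by simp
  qed
  have "real d = (\<Sum>w\<in>W0. p w) + (\<Sum>w\<in>W1. p w)" using sum1 split by simp
  also have "(\<Sum>w\<in>W0. p w) = real (card W0) * p v" using pW0 by simp
  also have "(\<Sum>w\<in>W1. p w) \<le> real (card W1) * U" using sum_mono[of W1 p "\<lambda>_. U"] pW1 by simp
  finally have main: "real d \<le> real (card W0) * p v + real (card W1) * U" by simp
  have "real (card W0) * p v \<le> real n * p v" using cW0 pnn by (intro mult_right_mono) auto
  hence "real d \<le> real n * p v + real (card W1) * U" using main by simp
  hence "real d - real n * p v \<le> real (card W1) * U" by linarith
  hence "(real d - real n * p v) / real n \<le> real (card W1) * U / real n" using rn by (simp add: divide_right_mono)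
  moreover have "(real d - real n * p v) / real n = real d / real n - p v" using rn by (simp add: field_simps)
  ultimately have "real d / real n - p v \<le> real (card W1) * U / real n" by simp
  also have "\<dots> = real (card W1) * real d / (real n)^2 + real (card W1) / real n * (2 * real M / (real n)^2)"
    unfolding U_def using rn by (simp add: field_simps power2_eq_square)
  also have "\<dots> \<le> 2 * real d * (real (card E1) + real (card E2)) / (real n)^2 + 2 * real M / (real n)^2"
  proof (rule add_mono)
    have "real (card W1) * real d \<le> 2 * real d * (real (card E1) + real (card E2))"
    proof -
      have "real (card W1) \<le> 2 * (real (card E1) + real (card E2))" using cW1
        by (metis of_nat_add of_nat_le_iff of_nat_mult of_nat_numeral)
      hence "real (card W1) * real d \<le> 2 * (real (card E1) + real (card E2)) * real d"
        by (rule mult_right_mono) simp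
      thus ?thesis by (simp add: algebra_simps)
    qed
    thus "real (card W1) * real d / (real n)^2 \<le> 2 * real d * (real (card E1) + real (card E2)) / (real n)^2"
      by (rule divide_right_mono) simp
    have "real (card W1) / real n \<le> 1" using cW1n rn by simp
    moreover have "0 \<le> 2 * real M / (real n)^2" by simp
    ultimately show "real (card W1) / real n * (2 * real M / (real n)^2) \<le> 2 * real M / (real n)^2"
      using mult_right_mono[of "real (card W1) / real n" 1 "2 * real M / (real n)^2"] by simp
  qed
  finally show ?thesis unfolding p_def .
qed

lemma ln_bound:
  fixes A B :: real
  assumes A: "A \<ge> 0" and B: "B \<ge> 0" and n: "real n \<ge> (2 * A + B + 1)^2"
  shows "A * ln (real n) + B \<le> real n"
proof -
  define s where "s = sqrt (real n)"
  have s1: "s \<ge> 2 * A + B + 1" unfolding s_def using n A B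
    by (metis abs_of_nonneg add_nonneg_nonneg mult_nonneg_nonneg real_le_rsqrt zero_le_numeral zero_le_one)
  hence spos: "s > 0" using A B by linarith
  have nss: "real n = s * s" unfolding s_def using n
    using real_sqrt_mult_self[of "real n"] by simp
  have "ln (real n) = 2 * ln s" unfolding nss using spos by (simp add: ln_mult)
  also have "\<dots> \<le> 2 * s" using ln_le_minus_one[OF spos] by simp
  finally have lnb: "ln (real n) \<le> 2 * s" .
  have "A * ln (real n) + B \<le> A * (2 * s) + B" using lnb A by (simp add: mult_left_mono)
  also have "\<dots> \<le> A * (2 * s) + B * s" using B s1 A by (simp add: mult_left_mono[of 1 s B, simplified])
  also have "\<dots> = (2 * A + B) * s" by (simp add: algebra_simps)
  also have "\<dots> \<le> s * s" using s1 spos by (intro mult_right_mono) auto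
  finally show ?thesis using nss by simp
qed

lemma const_bounds:
  fixes a b d :: nat and K :: real
  assumes K: "K = 2 * real d + 2 * (6 * real d + 2 * (real d)^2 + 2)"
    and M: "M = 2 * a + 4 * d + 2 * d^2 + 2 * d * b"
  shows "2 * real M \<le> K * (1 + real a + real b)"
    "2 * real d * (real a + real b) + 2 * real M \<le> K * (1 + real a + real b)"
proof -
  have Mr: "real M = 2 * real a + 4 * real d + 2 * (real d)^2 + 2 * real d * real b" using M by simp
  have d0: "real d \<ge> 0" by simp
  have a0: "real a \<ge> 0" and b0: "real b \<ge> 0" by simp_all
  have e1: "K * (1 + real a + real b) - 2 * real d * (real a + real b) - 2 * real M =
     (4 + 12 * real d + 4 * (real d)^2 - 8 * real d - 4 * (real d)^2 + 2 * real d)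
     + real a * (2 * real d + 12 * real d + 4 * (real d)^2 + 4 - 2 * real d - 4)
     + real b * (2 * real d + 12 * real d + 4 * (real d)^2 + 4 - 2 * real d - 4 * real d)"
    unfolding K Mr by (simp add: algebra_simps power2_eq_square)
  have "0 \<le> K * (1 + real a + real b) - 2 * real d * (real a + real b) - 2 * real M"
    unfolding e1 using a0 b0 d0 by (intro add_nonneg_nonneg mult_nonneg_nonneg) (auto simp: power2_eq_square)
  thus "2 * real d * (real a + real b) + 2 * real M \<le> K * (1 + real a + real b)" by simp
  moreover have "0 \<le> 2 * real d * (real a + real b)" by simp
  ultimately show "2 * real M \<le> K * (1 + real a + real b)" by linarith
qed

theorem lemma6p8:
  fixes d :: nat and C :: real
  assumes "d \<ge> 1"
  shows "\<exists>K::real. \<exists>N::nat. \<forall>n\<ge>N.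
    (\<forall>E1 E2 e.
       E1 \<subseteq> vpairs n \<and> E2 \<subseteq> vpairs n \<and> E1 \<inter> E2 = {} \<and>
       real (card E1) \<le> C * ln (real n) \<and> real (card E2) \<le> C * ln (real n) \<and>
       cond_pos (reg_graphs n d) E1 E2 \<and>
       e \<in> vpairs n \<and> e \<notin> E1 \<union> E2 \<longrightarrow>
         cond_edge_prob (reg_graphs n d) E1 E2 e
           \<le> real d / real n + K * (1 + real (card E1) + real (card E2)) / (real n)^2 \<and>
         ((\<forall>f \<in> E1 \<union> E2. e \<inter> f = {}) \<longrightarrow>
           \<bar>cond_edge_prob (reg_graphs n d) E1 E2 e - real d / real n\<bar>
             \<le> K * (1 + real (card E1) + real (card E2)) / (real n)^2)) \<and>
    (\<forall>E1 E2 e.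
       E1 \<subseteq> {..<n} \<times> {..<n} \<and> E2 \<subseteq> {..<n} \<times> {..<n} \<and> E1 \<inter> E2 = {} \<and>
       real (card E1) \<le> C * ln (real n) \<and> real (card E2) \<le> C * ln (real n) \<and>
       cond_pos (bip_reg_graphs n d) E1 E2 \<and>
       e \<in> {..<n} \<times> {..<n} \<and> e \<notin> E1 \<union> E2 \<longrightarrow>
         cond_edge_prob (bip_reg_graphs n d) E1 E2 e
           \<le> real d / real n + K * (1 + real (card E1) + real (card E2)) / (real n)^2 \<and>
         ((\<forall>f \<in> E1 \<union> E2. fst e \<noteq> fst f \<and> snd e \<noteq> snd f) \<longrightarrow>
           \<bar>cond_edge_prob (bip_reg_graphs n d) E1 E2 e - real d / real n\<bar>
             \<le> K * (1 + real (card E1) + real (card E2)) / (real n)^2))"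
proof -
  have d: "d \<ge> 1" using assms .
  define K where "K = 2 * real d + 2 * (6 * real d + 2 * (real d)^2 + 2)"
  define A where "A = (4 + 4 * real d) * \<bar>C\<bar>"
  define B where "B = 2 * (4 * real d + 2 * (real d)^2)"
  define N where "N = nat \<lceil>(2 * A + B + 1)^2\<rceil> + 1"
  have A0: "A \<ge> 0" unfolding A_def by simp
  have B0: "B \<ge> 0" unfolding B_def by simp
  have keyN: "2 * (2 * a + 4 * d + 2 * d^2 + 2 * d * b) \<le> n * d"
    if n: "n \<ge> N" and a: "real a \<le> C * ln (real n)" and b: "real b \<le> C * ln (real n)" for n a b :: nat
  proof -
    have "real N \<ge> (2 * A + B + 1)^2" unfolding N_def by linarith
    hence n1: "real n \<ge> (2 * A + B + 1)^2" using n by linarith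
    have "n \<ge> 1" using n unfolding N_def by simp
    hence ln0: "ln (real n) \<ge> 0" by simp
    have "C * ln (real n) \<le> \<bar>C\<bar> * ln (real n)" using ln0 by (intro mult_right_mono) auto
    hence a': "real a \<le> \<bar>C\<bar> * ln (real n)" and b': "real b \<le> \<bar>C\<bar> * ln (real n)" using a b by linarith+
    have "real (2 * (2 * a + 4 * d + 2 * d^2 + 2 * d * b)) = 4 * real a + 4 * real d * real b + B"
      unfolding B_def by (simp add: algebra_simps)
    also have "\<dots> \<le> 4 * (\<bar>C\<bar> * ln (real n)) + 4 * real d * (\<bar>C\<bar> * ln (real n)) + B"
      using a' b' by (intro add_mono mult_left_mono) auto
    also have "\<dots> = A * ln (real n) + B" unfolding A_def by (simp add: algebra_simps)
    also have "\<dots> \<le> real n" by (rule ln_bound[OF A0 B0 n1])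
    also have "\<dots> \<le> real (n * d)"
    proof -
      have "real n * 1 \<le> real n * real d" using d by (intro mult_left_mono) auto
      thus ?thesis by simp
    qed
    finally show ?thesis by (simp only: of_nat_le_iff)
  qed
  show ?thesis
  proof (intro exI[of _ K] exI[of _ N] allI impI conjI)
    fix n :: nat assume n: "n \<ge> N"
    {
      fix E1 E2 e
      assume H: "E1 \<subseteq> vpairs n \<and> E2 \<subseteq> vpairs n \<and> E1 \<inter> E2 = {} \<and>
       real (card E1) \<le> C * ln (real n) \<and> real (card E2) \<le> C * ln (real n) \<and>
       cond_pos (reg_graphs n d) E1 E2 \<and> e \<in> vpairs n \<and> e \<notin> E1 \<union> E2"
      hence E: "E1 \<subseteq> vpairs n" "E2 \<subseteq> vpairs n" and c: "real (card E1) \<le> C * ln (real n)"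
        "real (card E2) \<le> C * ln (real n)" and pos: "cond_pos (reg_graphs n d) E1 E2"
        and ev: "e \<in> vpairs n" and ne: "e \<notin> E1" "e \<notin> E2" by auto
      obtain u v where uv: "e = {u, v}" using ev unfolding vpairs_def by blast
      define M where "M = 2 * card E1 + 4 * d + 2 * d^2 + 2 * d * card E2"
      have M2: "2 * M \<le> n * d" unfolding M_def by (rule keyN[OF n c])
      have cb: "2 * real M \<le> K * (1 + real (card E1) + real (card E2))"
        "2 * real d * (real (card E1) + real (card E2)) + 2 * real M \<le> K * (1 + real (card E1) + real (card E2))"
        using const_bounds[OF K_def, of M "card E1" "card E2"] M_def by (simp_all add: algebra_simps)
      have up: "cond_edge_prob (reg_graphs n d) E1 E2 e \<le> real d / real n + 2 * real M / (real n)^2"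
        unfolding uv by (rule reg_upper[OF E ev[unfolded uv] ne[unfolded uv] pos M_def M2 d])
      have up': "2 * real M / (real n)^2 \<le> K * (1 + real (card E1) + real (card E2)) / (real n)^2"
        using cb(1) by (simp add: divide_right_mono)
      show "cond_edge_prob (reg_graphs n d) E1 E2 e
           \<le> real d / real n + K * (1 + real (card E1) + real (card E2)) / (real n)^2"
        using up up' by linarith
      {
        assume disj: "\<forall>f \<in> E1 \<union> E2. e \<inter> f = {}"
        have lo: "real d / real n - cond_edge_prob (reg_graphs n d) E1 E2 e
          \<le> 2 * real d * (real (card E1) + real (card E2)) / (real n)^2 + 2 * real M / (real n)^2"
          unfolding uv by (rule reg_lower[OF E ev[unfolded uv] disj[unfolded uv] pos M_def M2 d])
        have lo': "2 * real d * (real (card E1) + real (card E2)) / (real n)^2 + 2 * real M / (real n)^2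
           \<le> K * (1 + real (card E1) + real (card E2)) / (real n)^2"
          using cb(2) by (simp add: divide_right_mono add_divide_distrib[symmetric])
        show "\<bar>cond_edge_prob (reg_graphs n d) E1 E2 e - real d / real n\<bar>
             \<le> K * (1 + real (card E1) + real (card E2)) / (real n)^2"
          using up up' lo lo' by linarith
      }
    }
    {
      fix E1 E2 e
      assume H: "E1 \<subseteq> {..<n} \<times> {..<n} \<and> E2 \<subseteq> {..<n} \<times> {..<n} \<and> E1 \<inter> E2 = {} \<and>
       real (card E1) \<le> C * ln (real n) \<and> real (card E2) \<le> C * ln (real n) \<and>
       cond_pos (bip_reg_graphs n d) E1 E2 \<and> e \<in> {..<n} \<times> {..<n} \<and> e \<notin> E1 \<union> E2"
      hence E: "E1 \<subseteq> {..<n} \<times> {..<n}" "E2 \<subseteq> {..<n} \<times> {..<n}" and c: "real (card E1) \<le> C * ln (real n)"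
        "real (card E2) \<le> C * ln (real n)" and pos: "cond_pos (bip_reg_graphs n d) E1 E2"
        and ev: "e \<in> {..<n} \<times> {..<n}" and ne: "e \<notin> E1" "e \<notin> E2" by auto
      obtain u v where uv: "e = (u, v)" by (cases e)
      have uvn: "u < n" "v < n" using ev uv by auto
      define M where "M = 2 * card E1 + 4 * d + 2 * d^2 + 2 * d * card E2"
      have M2: "2 * M \<le> n * d" unfolding M_def by (rule keyN[OF n c])
      have cb: "2 * real M \<le> K * (1 + real (card E1) + real (card E2))"
        "2 * real d * (real (card E1) + real (card E2)) + 2 * real M \<le> K * (1 + real (card E1) + real (card E2))"
        using const_bounds[OF K_def, of M "card E1" "card E2"] M_def by (simp_all add: algebra_simps)
      have up: "cond_edge_prob (bip_reg_graphs n d) E1 E2 e \<le> real d / real n + 2 * real M / (real n)^2"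
        unfolding uv by (rule bip_upper[OF E uvn ne[unfolded uv] pos M_def M2 d])
      have up': "2 * real M / (real n)^2 \<le> K * (1 + real (card E1) + real (card E2)) / (real n)^2"
        using cb(1) by (simp add: divide_right_mono)
      show "cond_edge_prob (bip_reg_graphs n d) E1 E2 e
           \<le> real d / real n + K * (1 + real (card E1) + real (card E2)) / (real n)^2"
        using up up' by linarith
      {
        assume disj: "\<forall>f \<in> E1 \<union> E2. fst e \<noteq> fst f \<and> snd e \<noteq> snd f"
        have disj': "\<forall>f \<in> E1 \<union> E2. u \<noteq> fst f \<and> v \<noteq> snd f" using disj uv by simp
        have lo: "real d / real n - cond_edge_prob (bip_reg_graphs n d) E1 E2 e
          \<le> 2 * real d * (real (card E1) + real (card E2)) / (real n)^2 + 2 * real M / (real n)^2"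
          unfolding uv by (rule bip_lower[OF E uvn disj' pos M_def M2 d])
        have lo': "2 * real d * (real (card E1) + real (card E2)) / (real n)^2 + 2 * real M / (real n)^2
           \<le> K * (1 + real (card E1) + real (card E2)) / (real n)^2"
          using cb(2) by (simp add: divide_right_mono add_divide_distrib[symmetric])
        show "\<bar>cond_edge_prob (bip_reg_graphs n d) E1 E2 e - real d / real n\<bar>
             \<le> K * (1 + real (card E1) + real (card E2)) / (real n)^2"
          using up up' lo lo' by linarith
      }
    }
  qed
qed


end
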